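(* Let $\{(\mathcal{X}_j,\mathring{\mathcal{X}}_j,p_j)\}_{j\in\mathcal{I}}$ be $B$-$B$-bimodules with specified projections with reduced free product $(\mathcal{X},\mathring{\mathcal{X}},p)$ and let $i\in\mathcal{I}$. Then the map $\beta_i:\mathcal{L}(\mathcal{X}_i)\to\mathcal{L}(\mathcal{X})$, $\beta_i(a)=P_i\lambda_i(a)P_i$, is a homomorphism.
   Context: $B$ is a unital complex algebra. A $B$-$B$-bimodule with specified projection is a triple $(\mathcal{X},\mathring{\mathcal{X}},p)$ with $\mathcal{X}=B\oplus\mathring{\mathcal{X}}$ a direct sum of $B$-$B$-bimodules and $p(b\oplus\eta)=b$; $\mathcal{L}(\mathcal{X})$ is the algebra of linear operators on $\mathcal{X}$ respecting the bimodule structure. The reduced free product is $\mathcal{X}=B\oplus\mathring{\mathcal{X}}$ with $\mathring{\mathcal{X}}=\bigoplus_{n\ge1}\bigoplus_{i_1\ne\cdots\ne i_n}\mathring{\mathcal{X}}_{i_1}\otimes_B\cdots\otimes_B\mathring{\mathcal{X}}_{i_n}$ (consecutive indices distinct). For $i\in\mathcal{I}$, $\mathcal{X}(i)=B\oplus\bigoplus_{n\ge1}\bigoplus_{i_1\ne\cdots\ne i_n,\ i_1\ne i}\mathring{\mathcal{X}}_{i_1}\otimes_B\cdots\otimes_B\mathring{\mathcal{X}}_{i_n}$, $V_i:\mathcal{X}\to\mathcal{X}_i\otimes_B\mathcal{X}(i)$ is the natural bimodule isomorphism, $\lambda_i(a)=V_i^{-1}(a\otimes I)V_i$, and $P_i$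 is the projection of $\mathcal{X}$ onto the summand $B\oplus\mathring{\mathcal{X}}_i$, vanishing on the other direct summands. *)

theory Defs
  imports Complex_Main
begin

class cvec = ab_group_add +
  fixes scaleC :: "complex \<Rightarrow> 'a \<Rightarrow> 'a" (infixr \<open>*\<^sub>C\<close> 75)
  assumes scaleC_add_right: "c *\<^sub>C (x + y) = c *\<^sub>C x + c *\<^sub>C y"
    and scaleC_add_left: "(c + d) *\<^sub>C x = c *\<^sub>C x + d *\<^sub>C x"
    and scaleC_scaleC: "c *\<^sub>C (d *\<^sub>C x) = (c * d) *\<^sub>C x"
    and scaleC_one: "1 *\<^sub>C x = x"

class calg1 = cvec + ring_1 +
  assumes mult_scaleC_left: "(c *\<^sub>C x) * y = c *\<^sub>C (x * y)"
    and mult_scaleC_right: "x * (c *\<^sub>C y) = c *\<^sub>C (x * y)"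

section \<open>B-B-bimodules (as subspaces of a complex vector space with actions)\<close>

definition bimod :: "'x::cvec set \<Rightarrow> ('b::calg1 \<Rightarrow> 'x \<Rightarrow> 'x) \<Rightarrow> ('x \<Rightarrow> 'b \<Rightarrow> 'x) \<Rightarrow> bool" where
  "bimod M l r \<longleftrightarrow> 0 \<in> M \<and> (\<forall>x\<in>M. \<forall>y\<in>M. x + y \<in> M) \<and> (\<forall>c. \<forall>x\<in>M. c *\<^sub>C x \<in> M)
    \<and> (\<forall>b. \<forall>x\<in>M. l b x \<in> M \<and> r x b \<in> M)
    \<and> (\<forall>x\<in>M. l 1 x = x \<and> r x 1 = x)
    \<and> (\<forall>a b. \<forall>x\<in>M. l a (l b x) = l (a * b) x \<and> r (r x a) b = r x (a * b) \<and> l a (r x b) = r (l a x) b)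
    \<and> (\<forall>a b. \<forall>x\<in>M. \<forall>y\<in>M. l (a + b) x = l a x + l b x \<and> l a (x + y) = l a x + l a y
                        \<and> r x (a + b) = r x a + r x b \<and> r (x + y) a = r x a + r y a)
    \<and> (\<forall>c b. \<forall>x\<in>M. l (c *\<^sub>C b) x = c *\<^sub>C l b x \<and> l b (c *\<^sub>C x) = c *\<^sub>C l b x
                     \<and> r x (c *\<^sub>C b) = c *\<^sub>C r x b \<and> r (c *\<^sub>C x) b = c *\<^sub>C r x b)"

record ('v, 'b) bimodr =
  car :: "'v set"
  add :: "'v \<Rightarrow> 'v \<Rightarrow> 'v"
  scl :: "complex \<Rightarrow> 'v \<Rightarrow> 'v"
  lac :: "'b \<Rightarrow> 'v \<Rightarrow> 'v"
  rac :: "'v \<Rightarrow> 'b \<Rightarrow> 'v"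

definition Lop :: "('v, 'b) bimodr \<Rightarrow> ('v \<Rightarrow> 'v) set" where
  "Lop M = {T. (\<forall>u\<in>car M. T u \<in> car M)
      \<and> (\<forall>u\<in>car M. \<forall>u'\<in>car M. T (add M u u') = add M (T u) (T u'))
      \<and> (\<forall>z. \<forall>u\<in>car M. T (scl M z u) = scl M z (T u))
      \<and> (\<forall>b. \<forall>u\<in>car M. T (lac M b u) = lac M b (T u) \<and> T (rac M u b) = rac M (T u) b)}"

text \<open>Algebra homomorphism \<open>\<L>(M) \<rightarrow> \<L>(N)\<close> (operators compared on the carrier).\<close>
definition is_alg_hom :: "('u, 'b) bimodr \<Rightarrow> ('v, 'b) bimodr \<Rightarrow> (('u \<Rightarrow> 'u) \<Rightarrow> ('v \<Rightarrow> 'v)) \<Rightarrow> bool" where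
  "is_alg_hom M N \<beta> \<longleftrightarrow>
     (\<forall>a\<in>Lop M. \<beta> a \<in> Lop N)
   \<and> (\<forall>a\<in>Lop M. \<forall>a'\<in>Lop M. \<forall>v\<in>car N.
         \<beta> (a \<circ> a') v = \<beta> a (\<beta> a' v)
       \<and> \<beta> (\<lambda>u. add M (a u) (a' u)) v = add N (\<beta> a v) (\<beta> a' v))
   \<and> (\<forall>z. \<forall>a\<in>Lop M. \<forall>v\<in>car N. \<beta> (\<lambda>u. scl M z (a u)) v = scl N z (\<beta> a v))"

definition free_on :: "'g set \<Rightarrow> ('g \<Rightarrow> complex) set" where
  "free_on G = {f. finite {g. f g \<noteq> 0} \<and> (\<forall>g. f g \<noteq> 0 \<longrightarrow> g \<in> G)}"

definition delta :: "'g \<Rightarrow> 'g \<Rightarrow> complex" where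
  "delta g = (\<lambda>h. if h = g then 1 else 0)"

definition fsub :: "('g \<Rightarrow> complex) \<Rightarrow> ('g \<Rightarrow> complex) \<Rightarrow> 'g \<Rightarrow> complex" where
  "fsub f g = (\<lambda>h. f h - g h)"

definition fplus :: "('g \<Rightarrow> complex) \<Rightarrow> ('g \<Rightarrow> complex) \<Rightarrow> 'g \<Rightarrow> complex" where
  "fplus f g = (\<lambda>h. f h + g h)"

definition fscale :: "complex \<Rightarrow> ('g \<Rightarrow> complex) \<Rightarrow> 'g \<Rightarrow> complex" where
  "fscale z f = (\<lambda>h. z * f h)"

definition cspan :: "('g \<Rightarrow> complex) set \<Rightarrow> ('g \<Rightarrow> complex) set" where
  "cspan S = {(\<lambda>h. \<Sum>k<n. c k * v k h) | (n::nat) c v. \<forall>k<n. v k \<in> S}"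

definition lin_ext :: "('g \<Rightarrow> ('h \<Rightarrow> complex)) \<Rightarrow> ('g \<Rightarrow> complex) \<Rightarrow> 'h \<Rightarrow> complex" where
  "lin_ext \<Phi> r = (\<lambda>h. \<Sum>g\<in>{g. r g \<noteq> 0}. r g * \<Phi> g h)"

definition qcls :: "('g \<Rightarrow> complex) set \<Rightarrow> ('g \<Rightarrow> complex) \<Rightarrow> ('g \<Rightarrow> complex) set" where
  "qcls N f = {g. fsub g f \<in> N}"

definition qspace :: "'g set \<Rightarrow> ('g \<Rightarrow> complex) set \<Rightarrow> ('g \<Rightarrow> complex) set set" where
  "qspace G N = qcls N ` free_on G"

definition qmap :: "('h \<Rightarrow> complex) set \<Rightarrow> (('g \<Rightarrow> complex) \<Rightarrow> ('h \<Rightarrow> complex))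
                     \<Rightarrow> ('g \<Rightarrow> complex) set \<Rightarrow> ('h \<Rightarrow> complex) set" where
  "qmap N' F c = {g. \<exists>f\<in>c. fsub g (F f) \<in> N'}"

definition qadd :: "('g \<Rightarrow> complex) set \<Rightarrow> ('g \<Rightarrow> complex) set \<Rightarrow> ('g \<Rightarrow> complex) set \<Rightarrow> ('g \<Rightarrow> complex) set" where
  "qadd N c d = {g. \<exists>f\<in>c. \<exists>f'\<in>d. fsub g (fplus f f') \<in> N}"

definition qscl :: "('g \<Rightarrow> complex) set \<Rightarrow> complex \<Rightarrow> ('g \<Rightarrow> complex) set \<Rightarrow> ('g \<Rightarrow> complex) set" where
  "qscl N z c = qmap N (fscale z) c"

definition Xmod :: "('i \<Rightarrow> 'x::cvec set) \<Rightarrow> ('i \<Rightarrow> 'b::calg1 \<Rightarrow> 'x \<Rightarrow> 'x) \<Rightarrow> ('i \<Rightarrow> 'x \<Rightarrow> 'b \<Rightarrow> 'x)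
                    \<Rightarrow> 'i \<Rightarrow> ('b \<times> 'x, 'b) bimodr" where
  "Xmod C lm rm j = \<lparr> car = UNIV \<times> C j,
      add = (\<lambda>(b, x) (b', x'). (b + b', x + x')),
      scl = (\<lambda>z (b, x). (z *\<^sub>C b, z *\<^sub>C x)),
      lac = (\<lambda>a (b, x). (a * b, lm j a x)),
      rac = (\<lambda>(b, x) a. (b * a, rm j x a)) \<rparr>"

definition alternating :: "'i list \<Rightarrow> bool" where
  "alternating w \<longleftrightarrow> (\<forall>k. Suc k < length w \<longrightarrow> w ! k \<noteq> w ! Suc k)"

text \<open>Basis of the free space: elementary tensors \<open>x\<^sub>1 \<otimes> \<dots> \<otimes> x\<^sub>n\<close> tagged by their index word.\<close>
definition fp_gen :: "('i \<Rightarrow> 'x set) \<Rightarrow> ('i list \<times> 'x list) set" where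
  "fp_gen C = {(w, xs). w \<noteq> [] \<and> alternating w \<and> length xs = length w
                        \<and> (\<forall>k<length w. xs ! k \<in> C (w ! k))}"

text \<open>Relations defining the tensor products over \<open>B\<close>: multilinearity and \<open>B\<close>-balancedness.\<close>
definition fp_rel :: "('i \<Rightarrow> 'x::cvec set) \<Rightarrow> ('i \<Rightarrow> 'b::calg1 \<Rightarrow> 'x \<Rightarrow> 'x) \<Rightarrow> ('i \<Rightarrow> 'x \<Rightarrow> 'b \<Rightarrow> 'x)
                    \<Rightarrow> ('i list \<times> 'x list \<Rightarrow> complex) set" where
  "fp_rel C lm rm = cspan (
      {fsub (fsub (delta (w, xs[k := x + y])) (delta (w, xs[k := x]))) (delta (w, xs[k := y]))
         | w xs k x y. (w, xs) \<in> fp_gen C \<and> k < length w \<and> x \<in> C (w ! k) \<and> y \<in> C (w ! k)}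
    \<union> {fsub (delta (w, xs[k := z *\<^sub>C x])) (fscale z (delta (w, xs[k := x])))
         | w xs k x z. (w, xs) \<in> fp_gen C \<and> k < length w \<and> x \<in> C (w ! k)}
    \<union> {fsub (delta (w, xs[k := rm (w ! k) x b, Suc k := y]))
              (delta (w, xs[k := x, Suc k := lm (w ! Suc k) b y]))
         | w xs k x y b. (w, xs) \<in> fp_gen C \<and> Suc k < length w
              \<and> x \<in> C (w ! k) \<and> y \<in> C (w ! Suc k)})"

type_synonym ('i, 'x) fpq = "('i list \<times> 'x list \<Rightarrow> complex) set"

text \<open>The reduced free product \<open>\<X> = B \<oplus> \<X>\<^sup>\<circ>\<close>; the second component is an element of
  \<open>\<X>\<^sup>\<circ>\<close> (an equivalence class of the free space modulo the relations).\<close>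
definition FP :: "('i \<Rightarrow> 'x::cvec set) \<Rightarrow> ('i \<Rightarrow> 'b::calg1 \<Rightarrow> 'x \<Rightarrow> 'x) \<Rightarrow> ('i \<Rightarrow> 'x \<Rightarrow> 'b \<Rightarrow> 'x)
                \<Rightarrow> ('b \<times> ('i, 'x) fpq, 'b) bimodr" where
  "FP C lm rm = (let N = fp_rel C lm rm in
     \<lparr> car = UNIV \<times> qspace (fp_gen C) N,
       add = (\<lambda>(b, c) (b', c'). (b + b', qadd N c c')),
       scl = (\<lambda>z (b, c). (z *\<^sub>C b, qscl N z c)),
       lac = (\<lambda>a (b, c). (a * b,
                qmap N (lin_ext (\<lambda>(w, xs). delta (w, xs[0 := lm (hd w) a (hd xs)]))) c)),
       rac = (\<lambda>(b, c) a. (b * a,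
                qmap N (lin_ext (\<lambda>(w, xs). delta (w, xs[length xs - 1 := rm (last w) (last xs) a]))) c)) \<rparr>)"

text \<open>The submodule \<open>\<X>(i)\<close>: \<open>B\<close> plus tensors whose word does not start with \<open>i\<close>.\<close>
definition Xsub :: "('i \<Rightarrow> 'x::cvec set) \<Rightarrow> ('i \<Rightarrow> 'b::calg1 \<Rightarrow> 'x \<Rightarrow> 'x) \<Rightarrow> ('i \<Rightarrow> 'x \<Rightarrow> 'b \<Rightarrow> 'x)
                  \<Rightarrow> 'i \<Rightarrow> ('b \<times> ('i, 'x) fpq) set" where
  "Xsub C lm rm i = {(b, c). c \<in> qspace (fp_gen C) (fp_rel C lm rm)
        \<and> (\<exists>f\<in>c. f \<in> free_on {(w, xs) \<in> fp_gen C. hd w \<noteq> i})}"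

section \<open>Balanced tensor product \<open>M \<otimes>\<^sub>B S\<close> (S a sub-bimodule of N given by its carrier)\<close>

definition tens_rel :: "('u, 'b::calg1) bimodr \<Rightarrow> ('v, 'b) bimodr \<Rightarrow> 'v set \<Rightarrow> ('u \<times> 'v \<Rightarrow> complex) set" where
  "tens_rel M N S = cspan (
      {fsub (fsub (delta (add M u u', v)) (delta (u, v))) (delta (u', v)) | u u' v.
          u \<in> car M \<and> u' \<in> car M \<and> v \<in> S}
    \<union> {fsub (fsub (delta (u, add N v v')) (delta (u, v))) (delta (u, v')) | u v v'.
          u \<in> car M \<and> v \<in> S \<and> v' \<in> S}
    \<union> {fsub (delta (scl M z u, v)) (fscale z (delta (u, v))) | u v z. u \<in> car M \<and> v \<in> S}
    \<union> {fsub (delta (u, scl N z v)) (fscale z (delta (u, v))) | u v z. u \<in> car M \<and> v \<in> S}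
    \<union> {fsub (delta (rac M u b, v)) (delta (u, lac N b v)) | u v b. u \<in> car M \<and> v \<in> S})"

definition tens_space :: "('u, 'b::calg1) bimodr \<Rightarrow> ('v, 'b) bimodr \<Rightarrow> 'v set \<Rightarrow> ('u \<times> 'v \<Rightarrow> complex) set set" where
  "tens_space M N S = qspace (car M \<times> S) (tens_rel M N S)"

definition Ti_rel where
  "Ti_rel C lm rm i = tens_rel (Xmod C lm rm i) (FP C lm rm) (Xsub C lm rm i)"

text \<open>The natural bimodule isomorphism \<open>V\<^sub>i : \<X> \<rightarrow> \<X>\<^sub>i \<otimes>\<^sub>B \<X>(i)\<close>, given on elementary tensors.\<close>
definition V_gen :: "('i \<Rightarrow> 'x::cvec set) \<Rightarrow> ('i \<Rightarrow> 'b::calg1 \<Rightarrow> 'x \<Rightarrow> 'x) \<Rightarrow> ('i \<Rightarrow> 'x \<Rightarrow> 'b \<Rightarrow> 'x)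
     \<Rightarrow> 'i \<Rightarrow> 'i list \<times> 'x list \<Rightarrow> ('b \<times> 'x) \<times> ('b \<times> ('i, 'x) fpq) \<Rightarrow> complex" where
  "V_gen C lm rm i = (\<lambda>(w, xs). let N = fp_rel C lm rm in
      if hd w = i then
        (if tl w = [] then delta ((0, hd xs), (1, N))
         else delta ((0, hd xs), (0, qcls N (delta (tl w, tl xs)))))
      else delta ((1, 0), (0, qcls N (delta (w, xs)))))"

definition V_map :: "('i \<Rightarrow> 'x::cvec set) \<Rightarrow> ('i \<Rightarrow> 'b::calg1 \<Rightarrow> 'x \<Rightarrow> 'x) \<Rightarrow> ('i \<Rightarrow> 'x \<Rightarrow> 'b \<Rightarrow> 'x)
     \<Rightarrow> 'i \<Rightarrow> 'b \<times> ('i, 'x) fpq \<Rightarrow> (('b \<times> 'x) \<times> ('b \<times> ('i, 'x) fpq) \<Rightarrow> complex) set" where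
  "V_map C lm rm i = (\<lambda>(b, c).
      {g. \<exists>f\<in>c. fsub g (fplus (delta ((b, 0), (1, fp_rel C lm rm))) (lin_ext (V_gen C lm rm i) f))
                 \<in> Ti_rel C lm rm i})"

definition tensor_I where
  "tensor_I C lm rm i a = qmap (Ti_rel C lm rm i) (lin_ext (\<lambda>(u, v). delta (a u, v)))"

definition lambda_i where
  "lambda_i C lm rm i a =
     inv_into (car (FP C lm rm)) (V_map C lm rm i) \<circ> tensor_I C lm rm i a \<circ> V_map C lm rm i"

text \<open>\<open>P\<^sub>i\<close>: projection onto \<open>B \<oplus> \<X>\<^sup>\<circ>\<^sub>i\<close>, killing all other summands.\<close>
definition P_i where
  "P_i C lm rm i = (\<lambda>(b, c). (b,
     qmap (fp_rel C lm rm) (\<lambda>f (w, xs). if w = [i] then f (w, xs) else 0) c))"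

definition beta_i where
  "beta_i C lm rm i a = P_i C lm rm i \<circ> lambda_i C lm rm i a \<circ> P_i C lm rm i"

end

theory Submission
  imports Defs
begin



instantiation complex :: cvec
begin
definition scaleC_complex :: "complex \<Rightarrow> complex \<Rightarrow> complex" where "scaleC_complex c z = c * z"
instance by standard (auto simp: scaleC_complex_def algebra_simps)
end

lemma scaleC_zero_left[simp]: "0 *\<^sub>C (x::'a::cvec) = 0"
  using scaleC_add_left[of 0 0 x] by simp

lemma scaleC_zero_right[simp]: "c *\<^sub>C (0::'a::cvec) = 0"
  using scaleC_add_right[of c 0 0] by simp

lemma scaleC_minus_right: "c *\<^sub>C (- (x::'a::cvec)) = - (c *\<^sub>C x)"
  using scaleC_add_right[of c x "-x"] by (simp add: eq_neg_iff_add_eq_0 add.commute)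

lemma scaleC_diff_right: "c *\<^sub>C ((x::'a::cvec) - y) = c *\<^sub>C x - c *\<^sub>C y"
  using scaleC_add_right[of c x "-y"] by (simp add: scaleC_minus_right)

lemma scaleC_minus_left: "(- c) *\<^sub>C (x::'a::cvec) = - (c *\<^sub>C x)"
  using scaleC_add_left[of c "-c" x] by (simp add: eq_neg_iff_add_eq_0 add.commute)

lemma scaleC_diff_left: "(c - d) *\<^sub>C (x::'a::cvec) = c *\<^sub>C x - d *\<^sub>C x"
  using scaleC_add_left[of c "-d" x] by (simp add: scaleC_minus_left)

lemma scaleC_sum_right: "c *\<^sub>C (\<Sum>k\<in>K. f k) = (\<Sum>k\<in>K. c *\<^sub>C (f k::'a::cvec))"
  by (induction K rule: infinite_finite_induct) (auto simp: scaleC_add_right)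

abbreviation fin :: "('g \<Rightarrow> complex) \<Rightarrow> bool" where "fin f \<equiv> finite {g. f g \<noteq> 0}"

definition lfun :: "('g \<Rightarrow> 'c::cvec) \<Rightarrow> ('g \<Rightarrow> complex) \<Rightarrow> 'c" where
  "lfun \<phi> f = (\<Sum>g\<in>{g. f g \<noteq> 0}. f g *\<^sub>C \<phi> g)"

lemma lfun_superset: "finite S \<Longrightarrow> {g. f g \<noteq> 0} \<subseteq> S \<Longrightarrow> lfun \<phi> f = (\<Sum>g\<in>S. f g *\<^sub>C \<phi> g)"
  unfolding lfun_def by (rule sum.mono_neutral_left) auto

lemma lin_ext_lfun: "lin_ext \<Phi> r h = lfun (\<lambda>g. \<Phi> g h) r"
  by (simp add: lin_ext_def lfun_def scaleC_complex_def)

lemma fin_add: "fin f \<Longrightarrow> fin g \<Longrightarrow> fin (\<lambda>h. f h + g h)"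
  by (rule finite_subset[of _ "{g. f g \<noteq> 0} \<union> {h. g h \<noteq> 0}"]) auto

lemma fin_diff: "fin f \<Longrightarrow> fin g \<Longrightarrow> fin (\<lambda>h. f h - g h)"
  by (rule finite_subset[of _ "{g. f g \<noteq> 0} \<union> {h. g h \<noteq> 0}"]) auto

lemma fin_scale: "fin f \<Longrightarrow> fin (\<lambda>h. c * f h)"
  by (rule finite_subset[of _ "{g. f g \<noteq> 0}"]) auto

lemma fin_delta: "fin (delta g)"
  by (rule finite_subset[of _ "{g}"]) (auto simp: delta_def)

lemma fin_zero: "fin (\<lambda>_. 0)" by simp

lemma fin_sum: "finite K \<Longrightarrow> \<forall>k\<in>K. fin (v k) \<Longrightarrow> fin (\<lambda>h. \<Sum>k\<in>K. c k * v k h)"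
proof (induction K rule: finite_induct)
  case empty then show ?case by simp
next
  case (insert k K)
  then show ?case using fin_add[OF fin_scale[of "v k" "c k"], of "\<lambda>h. \<Sum>k\<in>K. c k * v k h"] by simp
qed

lemma lfun_add: "fin f \<Longrightarrow> fin g \<Longrightarrow> lfun \<phi> (\<lambda>h. f h + g h) = lfun \<phi> f + lfun \<phi> g"
proof -
  assume a: "fin f" "fin g"
  let ?S = "{h. f h \<noteq> 0} \<union> {h. g h \<noteq> 0}"
  have "lfun \<phi> (\<lambda>h. f h + g h) = (\<Sum>h\<in>?S. (f h + g h) *\<^sub>C \<phi> h)"
    by (rule lfun_superset) (use a in auto)
  also have "\<dots> = (\<Sum>h\<in>?S. f h *\<^sub>C \<phi> h) + (\<Sum>h\<in>?S. g h *\<^sub>C \<phi> h)"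
    by (simp add: scaleC_add_left sum.distrib)
  also have "\<dots> = lfun \<phi> f + lfun \<phi> g"
  proof -
    have "lfun \<phi> f = (\<Sum>h\<in>?S. f h *\<^sub>C \<phi> h)" by (rule lfun_superset) (use a in auto)
    moreover have "lfun \<phi> g = (\<Sum>h\<in>?S. g h *\<^sub>C \<phi> h)" by (rule lfun_superset) (use a in auto)
    ultimately show ?thesis by simp
  qed
  finally show ?thesis .
qed

lemma lfun_scale: "fin f \<Longrightarrow> lfun \<phi> (\<lambda>h. c * f h) = c *\<^sub>C lfun \<phi> f"
proof -
  assume a: "fin f"
  have "lfun \<phi> (\<lambda>h. c * f h) = (\<Sum>h\<in>{h. f h \<noteq> 0}. (c * f h) *\<^sub>C \<phi> h)"
    by (rule lfun_superset) (use a in auto)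
  also have "\<dots> = c *\<^sub>C lfun \<phi> f"
    by (simp add: lfun_def scaleC_sum_right scaleC_scaleC)
  finally show ?thesis .
qed

lemma lfun_diff: "fin f \<Longrightarrow> fin g \<Longrightarrow> lfun \<phi> (\<lambda>h. f h - g h) = lfun \<phi> f - lfun \<phi> g"
proof -
  assume a: "fin f" "fin g"
  have e: "(\<lambda>h. f h - g h) = (\<lambda>h. f h + (-1) * g h)" by simp
  have "lfun \<phi> (\<lambda>h. f h - g h) = lfun \<phi> (\<lambda>h. f h + (-1) * g h)" by (simp only: e)
  also have "\<dots> = lfun \<phi> f + (-1) *\<^sub>C lfun \<phi> g"
    using a by (simp only: lfun_add fin_scale lfun_scale)
  also have "\<dots> = lfun \<phi> f - lfun \<phi> g" by (simp add: scaleC_minus_left scaleC_one)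
  finally show ?thesis .
qed

lemma lfun_zero[simp]: "lfun \<phi> (\<lambda>_. 0) = 0"
  by (simp add: lfun_def)

lemma lfun_delta[simp]: "lfun \<phi> (delta g) = \<phi> g"
proof -
  have "lfun \<phi> (delta g) = (\<Sum>h\<in>{g}. delta g h *\<^sub>C \<phi> h)"
    by (rule lfun_superset) (auto simp: delta_def)
  then show ?thesis by (simp add: delta_def scaleC_one)
qed

lemma lfun_sum: "finite K \<Longrightarrow> \<forall>k\<in>K. fin (v k) \<Longrightarrow>
   lfun \<phi> (\<lambda>h. \<Sum>k\<in>K. c k * v k h) = (\<Sum>k\<in>K. c k *\<^sub>C lfun \<phi> (v k))"
proof (induction K rule: finite_induct)
  case empty then show ?case by simp
next
  case (insert k K)
  have "lfun \<phi> (\<lambda>h. \<Sum>k\<in>insert k K. c k * v k h) = lfun \<phi> (\<lambda>h. c k * v k h + (\<Sum>k\<in>K. c k * v k h))"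
    using insert by simp
  also have "\<dots> = c k *\<^sub>C lfun \<phi> (v k) + lfun \<phi> (\<lambda>h. \<Sum>k\<in>K. c k * v k h)"
    using insert by (simp add: lfun_add fin_scale fin_sum lfun_scale)
  finally show ?case using insert by simp
qed

lemma lfun_cong: "(\<And>g. f g \<noteq> 0 \<Longrightarrow> \<phi> g = \<psi> g) \<Longrightarrow> lfun \<phi> f = lfun \<psi> f"
  unfolding lfun_def by (rule sum.cong) auto

lemma lin_ext_as_sum: "lin_ext \<Phi> f = (\<lambda>h. \<Sum>g\<in>{g. f g \<noteq> 0}. f g * \<Phi> g h)"
  by (simp add: lin_ext_def)

lemma fin_lin_ext: "fin f \<Longrightarrow> (\<forall>g. fin (\<Phi> g)) \<Longrightarrow> fin (lin_ext \<Phi> f)"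
  unfolding lin_ext_as_sum by (rule fin_sum) auto

lemma lfun_lin_ext: "fin f \<Longrightarrow> (\<forall>g. fin (\<Phi> g)) \<Longrightarrow> lfun \<psi> (lin_ext \<Phi> f) = lfun (\<lambda>g. lfun \<psi> (\<Phi> g)) f"
  unfolding lin_ext_as_sum by (subst lfun_sum) (auto simp: lfun_def)

lemma lin_ext_delta[simp]: "lin_ext \<Phi> (delta g) = \<Phi> g"
  by (rule ext) (simp add: lin_ext_lfun)

lemma lin_ext_fsub: "fin f \<Longrightarrow> fin g \<Longrightarrow> lin_ext \<Phi> (fsub f g) = fsub (lin_ext \<Phi> f) (lin_ext \<Phi> g)"
  unfolding fsub_def by (rule ext) (simp only: lin_ext_lfun lfun_diff)

lemma lin_ext_fplus: "fin f \<Longrightarrow> fin g \<Longrightarrow> lin_ext \<Phi> (fplus f g) = fplus (lin_ext \<Phi> f) (lin_ext \<Phi> g)"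
  by (rule ext) (simp add: lin_ext_lfun fplus_def lfun_add)

lemma lin_ext_fscale: "fin f \<Longrightarrow> lin_ext \<Phi> (fscale c f) = fscale c (lin_ext \<Phi> f)"
  by (rule ext) (simp add: lin_ext_lfun fscale_def lfun_scale scaleC_complex_def)

lemma lin_ext_sum: "finite K \<Longrightarrow> \<forall>k\<in>K. fin (v k) \<Longrightarrow>
   lin_ext \<Phi> (\<lambda>h. \<Sum>k\<in>K. c k * v k h) = (\<lambda>h. \<Sum>k\<in>K. c k * lin_ext \<Phi> (v k) h)"
  by (rule ext) (simp add: lin_ext_lfun lfun_sum scaleC_complex_def)

lemma lfun_fsub: "fin f \<Longrightarrow> fin g \<Longrightarrow> lfun \<phi> (fsub f g) = lfun \<phi> f - lfun \<phi> g"
  unfolding fsub_def by (simp only: lfun_diff)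
lemma lfun_fplus: "fin f \<Longrightarrow> fin g \<Longrightarrow> lfun \<phi> (fplus f g) = lfun \<phi> f + lfun \<phi> g"
  by (simp add: fplus_def lfun_add)
lemma lfun_fscale: "fin f \<Longrightarrow> lfun \<phi> (fscale c f) = c *\<^sub>C lfun \<phi> f"
  by (simp add: fscale_def lfun_scale)

lemma fin_fsub: "fin f \<Longrightarrow> fin g \<Longrightarrow> fin (fsub f g)" unfolding fsub_def by (rule fin_diff)
lemma fin_fplus: "fin f \<Longrightarrow> fin g \<Longrightarrow> fin (fplus f g)" by (simp add: fplus_def fin_add)
lemma fin_fscale: "fin f \<Longrightarrow> fin (fscale c f)" by (simp add: fscale_def fin_scale)

section \<open>Spans\<close>

lemma cspan_iff: "u \<in> cspan S \<longleftrightarrow> (\<exists>(n::nat) c v. u = (\<lambda>h. \<Sum>k<n. c k * v k h) \<and> (\<forall>k<n. v k \<in> S))"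
  unfolding cspan_def by blast

lemma cspan_zero: "(\<lambda>_. 0) \<in> cspan S"
  unfolding cspan_iff by (rule exI[of _ 0]) auto

lemma cspan_add1: "u \<in> cspan S \<Longrightarrow> v \<in> S \<Longrightarrow> (\<lambda>h. u h + c * v h) \<in> cspan S"
proof -
  assume "u \<in> cspan S" "v \<in> S"
  then obtain n :: nat and c0 v0 where u: "u = (\<lambda>h. \<Sum>k<n. c0 k * v0 k h)" and vs: "\<forall>k<n. v0 k \<in> S"
    unfolding cspan_iff by blast
  define c1 where "c1 = c0(n := c)"
  define v1 where "v1 = v0(n := v)"
  have "(\<lambda>h. u h + c * v h) = (\<lambda>h. \<Sum>k<Suc n. c1 k * v1 k h)"
    by (rule ext) (simp add: u c1_def v1_def)
  moreover have "\<forall>k<Suc n. v1 k \<in> S" using vs \<open>v \<in> S\<close> by (auto simp: v1_def less_Suc_eq)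
  ultimately show ?thesis unfolding cspan_iff by blast
qed

lemma cspan_gen: "v \<in> S \<Longrightarrow> v \<in> cspan S"
  using cspan_add1[OF cspan_zero, of v S 1] by simp

lemma cspan_add: "u \<in> cspan S \<Longrightarrow> w \<in> cspan S \<Longrightarrow> (\<lambda>h. u h + w h) \<in> cspan S"
proof -
  assume u: "u \<in> cspan S" and "w \<in> cspan S"
  then obtain n :: nat and c0 v0 where w: "w = (\<lambda>h. \<Sum>k<n. c0 k * v0 k h)" and vs: "\<forall>k<n. v0 k \<in> S"
    unfolding cspan_iff by blast
  have "\<forall>m\<le>n. (\<lambda>h. u h + (\<Sum>k<m. c0 k * v0 k h)) \<in> cspan S"
  proof (intro allI impI)
    fix m assume "m \<le> n"
    then show "(\<lambda>h. u h + (\<Sum>k<m. c0 k * v0 k h)) \<in> cspan S"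
    proof (induction m)
      case 0 then show ?case using u by simp
    next
      case (Suc m)
      then have "(\<lambda>h. u h + (\<Sum>k<m. c0 k * v0 k h)) \<in> cspan S" by simp
      from cspan_add1[OF this, of "v0 m" "c0 m"] Suc.prems vs
      show ?case by (simp add: add.assoc)
    qed
  qed
  then show ?thesis using w by simp
qed

lemma cspan_scale: "u \<in> cspan S \<Longrightarrow> (\<lambda>h. c * u h) \<in> cspan S"
proof -
  assume "u \<in> cspan S"
  then obtain n :: nat and c0 v0 where u: "u = (\<lambda>h. \<Sum>k<n. c0 k * v0 k h)" and vs: "\<forall>k<n. v0 k \<in> S"
    unfolding cspan_iff by blast
  have "(\<lambda>h. c * u h) = (\<lambda>h. \<Sum>k<n. (c * c0 k) * v0 k h)"
    by (rule ext) (simp add: u sum_distrib_left mult.assoc)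
  then show ?thesis using vs unfolding cspan_iff by (intro exI[of _ n] exI[of _ "\<lambda>k. c * c0 k"] exI[of _ v0]) simp
qed

lemma cspan_diff: "u \<in> cspan S \<Longrightarrow> w \<in> cspan S \<Longrightarrow> (\<lambda>h. u h - w h) \<in> cspan S"
  using cspan_add[of u S "\<lambda>h. (-1) * w h"] cspan_scale[of w S "-1"] by simp

lemma cspan_sum: "finite K \<Longrightarrow> \<forall>k\<in>K. u k \<in> cspan S \<Longrightarrow> (\<lambda>h. \<Sum>k\<in>K. c k * u k h) \<in> cspan S"
proof (induction K rule: finite_induct)
  case empty then show ?case using cspan_zero by simp
next
  case (insert k K)
  then show ?case using cspan_add[OF cspan_scale[of "u k" S "c k"], of "\<lambda>h. \<Sum>k\<in>K. c k * u k h"] by simp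
qed

lemma cspan_fsub: "u \<in> cspan S \<Longrightarrow> w \<in> cspan S \<Longrightarrow> fsub u w \<in> cspan S"
  by (simp add: fsub_def cspan_diff)
lemma cspan_fplus: "u \<in> cspan S \<Longrightarrow> w \<in> cspan S \<Longrightarrow> fplus u w \<in> cspan S"
  by (simp add: fplus_def cspan_add)
lemma cspan_fscale: "u \<in> cspan S \<Longrightarrow> fscale c u \<in> cspan S"
  by (simp add: fscale_def cspan_scale)

lemma cspan_fin: "\<forall>v\<in>S. fin v \<Longrightarrow> u \<in> cspan S \<Longrightarrow> fin u"
  unfolding cspan_iff by (auto intro!: fin_sum)

lemma lin_ext_cspan:
  assumes "\<forall>v\<in>S. fin v" "\<forall>v\<in>S. lin_ext \<Phi> v \<in> cspan S'" "u \<in> cspan S"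
  shows "lin_ext \<Phi> u \<in> cspan S'"
proof -
  from assms(3) obtain n :: nat and c0 v0 where u: "u = (\<lambda>h. \<Sum>k<n. c0 k * v0 k h)" and vs: "\<forall>k<n. v0 k \<in> S"
    unfolding cspan_iff by blast
  have "lin_ext \<Phi> u = (\<lambda>h. \<Sum>k\<in>{..<n}. c0 k * lin_ext \<Phi> (v0 k) h)"
    unfolding u by (rule lin_ext_sum) (use vs assms(1) in auto)
  also have "\<dots> \<in> cspan S'" by (rule cspan_sum) (use vs assms(2) in auto)
  finally show ?thesis .
qed

lemma lfun_cspan:
  assumes "\<forall>v\<in>S. fin v" "\<forall>v\<in>S. lfun \<phi> v = 0" "u \<in> cspan S"
  shows "lfun \<phi> u = 0"
proof -
  from assms(3) obtain n :: nat and c0 v0 where u: "u = (\<lambda>h. \<Sum>k<n. c0 k * v0 k h)" and vs: "\<forall>k<n. v0 k \<in> S"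
    unfolding cspan_iff by blast
  have "lfun \<phi> u = (\<Sum>k\<in>{..<n}. c0 k *\<^sub>C lfun \<phi> (v0 k))"
    unfolding u by (rule lfun_sum) (use vs assms(1) in auto)
  also have "\<dots> = 0" using vs assms(2) by simp
  finally show ?thesis .
qed

section \<open>Quotient classes\<close>

lemma fsub_self: "fsub f f = (\<lambda>_. 0)" by (simp add: fsub_def)

lemma qcls_self: "f \<in> qcls (cspan S) f"
  by (simp add: qcls_def fsub_self cspan_zero)

lemma qcls_eq: "fsub f g \<in> cspan S \<Longrightarrow> qcls (cspan S) f = qcls (cspan S) g"
proof -
  assume a: "fsub f g \<in> cspan S"
  have "fsub h f \<in> cspan S \<longleftrightarrow> fsub h g \<in> cspan S" for h
  proof
    assume "fsub h f \<in> cspan S"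
    from cspan_fplus[OF this a] show "fsub h g \<in> cspan S" by (simp add: fsub_def fplus_def)
  next
    assume "fsub h g \<in> cspan S"
    from cspan_fsub[OF this a] show "fsub h f \<in> cspan S" by (simp add: fsub_def)
  qed
  then show ?thesis by (simp add: qcls_def)
qed

lemma qcls_eqD: "qcls (cspan S) f = qcls (cspan S) g \<Longrightarrow> fsub f g \<in> cspan S"
  using qcls_self[of f S] by (simp add: qcls_def)

lemma qadd_qcls: "qadd (cspan S) (qcls (cspan S) f) (qcls (cspan S) g) = qcls (cspan S) (fplus f g)"
proof (rule set_eqI, rule iffI)
  fix h assume "h \<in> qadd (cspan S) (qcls (cspan S) f) (qcls (cspan S) g)"
  then obtain f' g' where "fsub f' f \<in> cspan S" "fsub g' g \<in> cspan S" "fsub h (fplus f' g') \<in> cspan S"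
    by (auto simp: qadd_def qcls_def)
  from cspan_fplus[OF this(3) cspan_fplus[OF this(1,2)]] show "h \<in> qcls (cspan S) (fplus f g)"
    by (simp add: qcls_def fsub_def fplus_def algebra_simps)
next
  fix h assume "h \<in> qcls (cspan S) (fplus f g)"
  then show "h \<in> qadd (cspan S) (qcls (cspan S) f) (qcls (cspan S) g)"
    unfolding qadd_def using qcls_self[of f S] qcls_self[of g S]
    by (intro CollectI bexI[of _ f] bexI[of _ g]) (auto simp: qcls_def)
qed

lemma qmap_qcls:
  assumes "\<And>f'. fsub f' f \<in> N \<Longrightarrow> fsub (\<Phi> f') (\<Phi> f) \<in> cspan S'"
    and "(\<lambda>_. 0) \<in> N"
  shows "qmap (cspan S') \<Phi> (qcls N f) = qcls (cspan S') (\<Phi> f)"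
proof (rule set_eqI, rule iffI)
  fix h assume "h \<in> qmap (cspan S') \<Phi> (qcls N f)"
  then obtain f' where "fsub f' f \<in> N" "fsub h (\<Phi> f') \<in> cspan S'"
    by (auto simp: qmap_def qcls_def)
  from cspan_fplus[OF this(2) assms(1)[OF this(1)]] show "h \<in> qcls (cspan S') (\<Phi> f)"
    by (simp add: qcls_def fsub_def fplus_def)
next
  fix h assume "h \<in> qcls (cspan S') (\<Phi> f)"
  moreover have "f \<in> qcls N f" using assms(2) by (simp add: qcls_def fsub_self)
  ultimately show "h \<in> qmap (cspan S') \<Phi> (qcls N f)"
    unfolding qmap_def by (auto simp: qcls_def)
qed




definition Rgens :: "('i \<Rightarrow> 'x::cvec set) \<Rightarrow> ('i \<Rightarrow> 'b::calg1 \<Rightarrow> 'x \<Rightarrow> 'x) \<Rightarrow> ('i \<Rightarrow> 'x \<Rightarrow> 'b \<Rightarrow> 'x)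
                    \<Rightarrow> ('i list \<times> 'x list \<Rightarrow> complex) set" where
  "Rgens C lm rm = (
      {fsub (fsub (delta (w, xs[k := x + y])) (delta (w, xs[k := x]))) (delta (w, xs[k := y]))
         | w xs k x y. (w, xs) \<in> fp_gen C \<and> k < length w \<and> x \<in> C (w ! k) \<and> y \<in> C (w ! k)}
    \<union> {fsub (delta (w, xs[k := z *\<^sub>C x])) (fscale z (delta (w, xs[k := x])))
         | w xs k x z. (w, xs) \<in> fp_gen C \<and> k < length w \<and> x \<in> C (w ! k)}
    \<union> {fsub (delta (w, xs[k := rm (w ! k) x b, Suc k := y]))
              (delta (w, xs[k := x, Suc k := lm (w ! Suc k) b y]))
         | w xs k x y b. (w, xs) \<in> fp_gen C \<and> Suc k < length w
              \<and> x \<in> C (w ! k) \<and> y \<in> C (w ! Suc k)})"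

lemma fp_rel_eq: "fp_rel C lm rm = cspan (Rgens C lm rm)"
  by (simp add: fp_rel_def Rgens_def)

definition Tgens where
  "Tgens M N S = (
      {fsub (fsub (delta (add M u u', v)) (delta (u, v))) (delta (u', v)) | u u' v.
          u \<in> car M \<and> u' \<in> car M \<and> v \<in> S}
    \<union> {fsub (fsub (delta (u, add N v v')) (delta (u, v))) (delta (u, v')) | u v v'.
          u \<in> car M \<and> v \<in> S \<and> v' \<in> S}
    \<union> {fsub (delta (scl M z u, v)) (fscale z (delta (u, v))) | u v z. u \<in> car M \<and> v \<in> S}
    \<union> {fsub (delta (u, scl N z v)) (fscale z (delta (u, v))) | u v z. u \<in> car M \<and> v \<in> S}
    \<union> {fsub (delta (rac M u b, v)) (delta (u, lac N b v)) | u v b. u \<in> car M \<and> v \<in> S})"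

lemma tens_rel_eq: "tens_rel M N S = cspan (Tgens M N S)"
  by (simp add: tens_rel_def Tgens_def)

lemma fin_simps[simp]: "fin (delta g)" "fin f \<Longrightarrow> fin g \<Longrightarrow> fin (fsub f g)" "fin f \<Longrightarrow> fin (fscale c f)"
  "fin f \<Longrightarrow> fin g \<Longrightarrow> fin (fplus f g)"
  by (auto simp: fin_delta fin_fsub fin_fscale fin_fplus)

lemma Rgens_fin: "\<forall>v\<in>Rgens C lm rm. fin v"
  unfolding Rgens_def by (auto intro!: fin_fsub fin_fscale fin_delta)

lemma Tgens_fin: "\<forall>v\<in>Tgens M N S. fin v"
  unfolding Tgens_def by (auto intro!: fin_fsub fin_fscale fin_delta)

lemma free_on_fin: "f \<in> free_on G \<Longrightarrow> fin f"
  by (simp add: free_on_def)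

lemma delta_free_on: "g \<in> G \<Longrightarrow> delta g \<in> free_on G"
  by (auto simp: free_on_def delta_def fin_delta)

lemma free_on_fplus: "f \<in> free_on G \<Longrightarrow> g \<in> free_on G \<Longrightarrow> fplus f g \<in> free_on G"
  by (auto simp: free_on_def fplus_def intro: fin_add) (metis add.right_neutral)

lemma free_on_fscale: "f \<in> free_on G \<Longrightarrow> fscale c f \<in> free_on G"
  by (auto simp: free_on_def fscale_def intro: fin_scale)

lemma lin_ext_free_on: "f \<in> free_on G \<Longrightarrow> (\<And>g. g \<in> G \<Longrightarrow> \<Phi> g \<in> free_on H) \<Longrightarrow> lin_ext \<Phi> f \<in> free_on H"
proof -
  assume f: "f \<in> free_on G" and ph: "\<And>g. g \<in> G \<Longrightarrow> \<Phi> g \<in> free_on H"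
  have K: "finite {g. f g \<noteq> 0}" "{g. f g \<noteq> 0} \<subseteq> G" using f by (auto simp: free_on_def)
  have "fin (lin_ext \<Phi> f)" unfolding lin_ext_as_sum
    by (rule fin_sum) (use K ph in \<open>auto simp: free_on_def\<close>)
  moreover have "lin_ext \<Phi> f h \<noteq> 0 \<Longrightarrow> h \<in> H" for h
  proof (rule ccontr)
    assume "lin_ext \<Phi> f h \<noteq> 0" "h \<notin> H"
    moreover have "\<Phi> g h = 0" if "f g \<noteq> 0" for g using ph[of g] K that \<open>h \<notin> H\<close> by (auto simp: free_on_def)
    ultimately show False by (simp add: lin_ext_def)
  qed
  ultimately show ?thesis by (simp add: free_on_def)
qed

locale fpctx =
  fixes C :: "'i \<Rightarrow> 'x::cvec set" and lm :: "'i \<Rightarrow> 'b::calg1 \<Rightarrow> 'x \<Rightarrow> 'x"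
    and rm :: "'i \<Rightarrow> 'x \<Rightarrow> 'b \<Rightarrow> 'x" and i :: 'i
  assumes bm: "\<forall>j. bimod (C j) (lm j) (rm j)"
begin

lemma C0[simp]: "0 \<in> C j" using bm by (simp add: bimod_def)
lemma Cadd[simp]: "x \<in> C j \<Longrightarrow> y \<in> C j \<Longrightarrow> x + y \<in> C j" using bm by (simp add: bimod_def)
lemma Cscl[simp]: "x \<in> C j \<Longrightarrow> c *\<^sub>C x \<in> C j" using bm by (simp add: bimod_def)
lemma Clm[simp]: "x \<in> C j \<Longrightarrow> lm j b x \<in> C j" using bm by (simp add: bimod_def)
lemma Crm[simp]: "x \<in> C j \<Longrightarrow> rm j x b \<in> C j" using bm by (simp add: bimod_def)
lemma lm1[simp]: "x \<in> C j \<Longrightarrow> lm j 1 x = x" using bm by (simp add: bimod_def)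
lemma rm1[simp]: "x \<in> C j \<Longrightarrow> rm j x 1 = x" using bm by (simp add: bimod_def)
lemma lm_rm: "x \<in> C j \<Longrightarrow> lm j a (rm j x b) = rm j (lm j a x) b" using bm by (simp add: bimod_def)
lemma rm_rm: "x \<in> C j \<Longrightarrow> rm j (rm j x a) b = rm j x (a * b)" using bm by (simp add: bimod_def)
lemma lm_lm: "x \<in> C j \<Longrightarrow> lm j a (lm j b x) = lm j (a * b) x" using bm by (simp add: bimod_def)
lemma lm_addb: "x \<in> C j \<Longrightarrow> lm j (a + b) x = lm j a x + lm j b x" using bm by (simp add: bimod_def)
lemma lm_addx: "x \<in> C j \<Longrightarrow> y \<in> C j \<Longrightarrow> lm j a (x + y) = lm j a x + lm j a y" using bm by (simp add: bimod_def)
lemma rm_addb: "x \<in> C j \<Longrightarrow> rm j x (a + b) = rm j x a + rm j x b" using bm by (simp add: bimod_def)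
lemma rm_addx: "x \<in> C j \<Longrightarrow> y \<in> C j \<Longrightarrow> rm j (x + y) a = rm j x a + rm j y a" using bm by (simp add: bimod_def)
lemma lm_sclb: "x \<in> C j \<Longrightarrow> lm j (c *\<^sub>C b) x = c *\<^sub>C lm j b x" using bm by (simp add: bimod_def)
lemma lm_sclx: "x \<in> C j \<Longrightarrow> lm j b (c *\<^sub>C x) = c *\<^sub>C lm j b x" using bm by (simp add: bimod_def)
lemma rm_sclb: "x \<in> C j \<Longrightarrow> rm j x (c *\<^sub>C b) = c *\<^sub>C rm j x b" using bm by (simp add: bimod_def)
lemma rm_sclx: "x \<in> C j \<Longrightarrow> rm j (c *\<^sub>C x) b = c *\<^sub>C rm j x b" using bm by (simp add: bimod_def)

lemma rm_x0[simp]: "x \<in> C j \<Longrightarrow> rm j x 0 = 0"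
  using rm_addb[of x j 0 0] by simp
lemma rm_0b[simp]: "rm j 0 b = 0"
  using rm_addx[of 0 j 0 b] by simp
lemma lm_0x[simp]: "x \<in> C j \<Longrightarrow> lm j 0 x = 0"
  using lm_addb[of x j 0 0] by simp
lemma lm_b0[simp]: "lm j b 0 = 0"
  using lm_addx[of 0 j 0 b] by simp

lemma Csum: "finite K \<Longrightarrow> \<forall>k\<in>K. x k \<in> C j \<Longrightarrow> (\<Sum>k\<in>K. c k *\<^sub>C x k) \<in> C j"
  by (induction K rule: finite_induct) auto

lemma lm_sum: "finite K \<Longrightarrow> \<forall>k\<in>K. x k \<in> C j \<Longrightarrow> lm j b (\<Sum>k\<in>K. c k *\<^sub>C x k) = (\<Sum>k\<in>K. c k *\<^sub>C lm j b (x k))"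
  by (induction K rule: finite_induct) (auto simp: lm_addx Csum lm_sclx)

lemma rm_sum: "finite K \<Longrightarrow> \<forall>k\<in>K. x k \<in> C j \<Longrightarrow> rm j (\<Sum>k\<in>K. c k *\<^sub>C x k) b = (\<Sum>k\<in>K. c k *\<^sub>C rm j (x k) b)"
  by (induction K rule: finite_induct) (auto simp: rm_addx Csum rm_sclx)

abbreviation "NN \<equiv> fp_rel C lm rm"
abbreviation "GG \<equiv> fp_gen C"
abbreviation "RR \<equiv> Rgens C lm rm"

lemma N_eq: "NN = cspan RR" by (rule fp_rel_eq)

lemma N_gen1: "(w, xs) \<in> GG \<Longrightarrow> k < length w \<Longrightarrow> x \<in> C (w ! k) \<Longrightarrow> y \<in> C (w ! k) \<Longrightarrow>
  fsub (fsub (delta (w, xs[k := x + y])) (delta (w, xs[k := x]))) (delta (w, xs[k := y])) \<in> NN"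
  unfolding N_eq by (rule cspan_gen) (unfold Rgens_def, blast)

lemma N_gen2: "(w, xs) \<in> GG \<Longrightarrow> k < length w \<Longrightarrow> x \<in> C (w ! k) \<Longrightarrow>
  fsub (delta (w, xs[k := z *\<^sub>C x])) (fscale z (delta (w, xs[k := x]))) \<in> NN"
  unfolding N_eq by (rule cspan_gen) (unfold Rgens_def, blast)

lemma N_gen3: "(w, xs) \<in> GG \<Longrightarrow> Suc k < length w \<Longrightarrow> x \<in> C (w ! k) \<Longrightarrow> y \<in> C (w ! Suc k) \<Longrightarrow>
  fsub (delta (w, xs[k := rm (w ! k) x b, Suc k := y])) (delta (w, xs[k := x, Suc k := lm (w ! Suc k) b y])) \<in> NN"
  unfolding N_eq by (rule cspan_gen) (unfold Rgens_def, blast)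

lemma N_lin_ext:
  assumes h1: "\<And>w xs k x y. (w, xs) \<in> GG \<Longrightarrow> k < length w \<Longrightarrow> x \<in> C (w ! k) \<Longrightarrow> y \<in> C (w ! k) \<Longrightarrow>
      lin_ext \<Phi> (fsub (fsub (delta (w, xs[k := x + y])) (delta (w, xs[k := x]))) (delta (w, xs[k := y]))) \<in> cspan S'"
  and h2: "\<And>w xs k x z. (w, xs) \<in> GG \<Longrightarrow> k < length w \<Longrightarrow> x \<in> C (w ! k) \<Longrightarrow>
      lin_ext \<Phi> (fsub (delta (w, xs[k := z *\<^sub>C x])) (fscale z (delta (w, xs[k := x])))) \<in> cspan S'"
  and h3: "\<And>w xs k x y b. (w, xs) \<in> GG \<Longrightarrow> Suc k < length w \<Longrightarrow> x \<in> C (w ! k) \<Longrightarrow> y \<in> C (w ! Suc k) \<Longrightarrow>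
      lin_ext \<Phi> (fsub (delta (w, xs[k := rm (w ! k) x b, Suc k := y])) (delta (w, xs[k := x, Suc k := lm (w ! Suc k) b y]))) \<in> cspan S'"
  and n: "n \<in> NN"
  shows "lin_ext \<Phi> n \<in> cspan S'"
proof (rule lin_ext_cspan[of RR])
  show "\<forall>v\<in>RR. fin v" by (rule Rgens_fin)
  show "\<forall>v\<in>RR. lin_ext \<Phi> v \<in> cspan S'"
    unfolding Rgens_def using h1 h2 h3 by blast
  show "n \<in> cspan RR" using n N_eq by simp
qed

lemma N_fin: "n \<in> NN \<Longrightarrow> fin n"
  using cspan_fin[OF Rgens_fin] N_eq by auto

lemma N_zero: "(\<lambda>_. 0) \<in> NN" using cspan_zero N_eq by simp
lemma N_fsub: "u \<in> NN \<Longrightarrow> v \<in> NN \<Longrightarrow> fsub u v \<in> NN" using cspan_fsub N_eq by metis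
lemma N_fplus: "u \<in> NN \<Longrightarrow> v \<in> NN \<Longrightarrow> fplus u v \<in> NN" using cspan_fplus N_eq by metis
lemma N_fscale: "u \<in> NN \<Longrightarrow> fscale c u \<in> NN" using cspan_fscale N_eq by metis

lemma qclsN_eq: "fsub f g \<in> NN \<Longrightarrow> qcls NN f = qcls NN g"
  using qcls_eq[of f g RR] N_eq by simp
lemma qclsN_eqD: "qcls NN f = qcls NN g \<Longrightarrow> fsub f g \<in> NN"
  using qcls_eqD[of RR f g] N_eq by simp
lemma qaddN: "qadd NN (qcls NN f) (qcls NN g) = qcls NN (fplus f g)"
  using qadd_qcls[of RR f g] N_eq by simp
lemma qcls_zero: "qcls NN (\<lambda>_. 0) = NN"
  by (auto simp: qcls_def fsub_def)

lemma qmap_lin_ext_N: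
  assumes "\<And>n. n \<in> NN \<Longrightarrow> lin_ext \<Phi> n \<in> NN" "fin f"
  shows "qmap NN (lin_ext \<Phi>) (qcls NN f) = qcls NN (lin_ext \<Phi> f)"
proof -
  have "qmap (cspan RR) (lin_ext \<Phi>) (qcls NN f) = qcls (cspan RR) (lin_ext \<Phi> f)"
  proof (rule qmap_qcls)
    fix f' assume a: "fsub f' f \<in> NN"
    have ff: "fin f'" proof -
      have "f' = fplus (fsub f' f) f" by (auto simp: fsub_def fplus_def)
      then show ?thesis using N_fin[OF a] assms(2) by (metis fin_simps(4))
    qed
    have "fsub (lin_ext \<Phi> f') (lin_ext \<Phi> f) = lin_ext \<Phi> (fsub f' f)"
      using ff assms(2) by (simp add: lin_ext_fsub)
    then show "fsub (lin_ext \<Phi> f') (lin_ext \<Phi> f) \<in> cspan RR" using assms(1)[OF a] N_eq by simp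
  next
    show "(\<lambda>_. 0) \<in> NN" by (rule N_zero)
  qed
  then show ?thesis using N_eq by simp
qed

lemma GG_def2: "(w, xs) \<in> GG \<longleftrightarrow> w \<noteq> [] \<and> alternating w \<and> length xs = length w \<and> (\<forall>k<length w. xs ! k \<in> C (w ! k))"
  by (simp add: fp_gen_def)

lemma GG_upd: "(w, xs) \<in> GG \<Longrightarrow> k < length w \<Longrightarrow> x \<in> C (w ! k) \<Longrightarrow> (w, xs[k := x]) \<in> GG"
  by (auto simp: GG_def2 nth_list_update)

lemma alternating_tl: "alternating (j # w) \<Longrightarrow> alternating w"
  unfolding alternating_def
proof (intro allI impI)
  fix k assume "\<forall>k. Suc k < length (j # w) \<longrightarrow> (j # w) ! k \<noteq> (j # w) ! Suc k" "Suc k < length w"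
  then show "w ! k \<noteq> w ! Suc k" by (auto dest: spec[of _ "Suc k"])
qed

lemma GG_tl: "(j # w, x # xs) \<in> GG \<Longrightarrow> w \<noteq> [] \<Longrightarrow> (w, xs) \<in> GG \<and> hd w \<noteq> j"
proof -
  assume a: "(j # w, x # xs) \<in> GG" "w \<noteq> []"
  then have alt: "alternating (j # w)" by (simp add: GG_def2)
  then have "hd w \<noteq> j" using a(2) unfolding alternating_def
    by (cases w) (auto dest: spec[of _ 0])
  moreover have "(w, xs) \<in> GG" using a alternating_tl[OF alt] unfolding GG_def2
    by (auto dest: spec[of _ "Suc _"])
  ultimately show ?thesis by simp
qed

lemma GG_single: "x \<in> C j \<Longrightarrow> ([j], [x]) \<in> GG"
  by (simp add: GG_def2 alternating_def)

lemma GG_single_iff: "([j], xs) \<in> GG \<longleftrightarrow> (\<exists>x. xs = [x] \<and> x \<in> C j)"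
  by (auto simp: GG_def2 alternating_def length_Suc_conv)

end




definition Lg :: "('i \<Rightarrow> 'b \<Rightarrow> 'x \<Rightarrow> 'x) \<Rightarrow> 'b \<Rightarrow> 'i list \<times> 'x list \<Rightarrow> 'i list \<times> 'x list \<Rightarrow> complex" where
  "Lg lm a = (\<lambda>(w, xs). delta (w, xs[0 := lm (hd w) a (hd xs)]))"
definition Rg :: "('i \<Rightarrow> 'x \<Rightarrow> 'b \<Rightarrow> 'x) \<Rightarrow> 'b \<Rightarrow> 'i list \<times> 'x list \<Rightarrow> 'i list \<times> 'x list \<Rightarrow> complex" where
  "Rg rm a = (\<lambda>(w, xs). delta (w, xs[length xs - 1 := rm (last w) (last xs) a]))"
definition Fr :: "'i \<Rightarrow> ('i list \<times> 'x list \<Rightarrow> complex) \<Rightarrow> 'i list \<times> 'x list \<Rightarrow> complex" where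
  "Fr i f = (\<lambda>(w, xs). if w = [i] then f (w, xs) else 0)"
definition s\<phi> :: "'i \<Rightarrow> 'i list \<times> 'x::cvec list \<Rightarrow> 'x" where
  "s\<phi> i = (\<lambda>(w, xs). if w = [i] then hd xs else 0)"

lemma lin_ext_d3: "lin_ext \<Phi> (fsub (fsub (delta a) (delta b)) (delta c)) = fsub (fsub (\<Phi> a) (\<Phi> b)) (\<Phi> c)"
  by (simp add: lin_ext_fsub fin_delta fin_fsub)
lemma lin_ext_d2: "lin_ext \<Phi> (fsub (delta a) (delta b)) = fsub (\<Phi> a) (\<Phi> b)"
  by (simp add: lin_ext_fsub fin_delta fin_fsub)
lemma lin_ext_ds: "lin_ext \<Phi> (fsub (delta a) (fscale z (delta b))) = fsub (\<Phi> a) (fscale z (\<Phi> b))"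
  by (simp add: lin_ext_fsub fin_delta fin_fsub fin_fscale lin_ext_fscale)
lemma lfun_d3: "lfun \<phi> (fsub (fsub (delta a) (delta b)) (delta c)) = \<phi> a - \<phi> b - \<phi> c"
  by (simp add: lfun_fsub fin_delta fin_fsub)
lemma lfun_d2: "lfun \<phi> (fsub (delta a) (delta b)) = \<phi> a - \<phi> b"
  by (simp add: lfun_fsub fin_delta fin_fsub)
lemma lfun_ds: "lfun \<phi> (fsub (delta a) (fscale z (delta b))) = \<phi> a - z *\<^sub>C \<phi> b"
  by (simp add: lfun_fsub fin_delta fin_fsub fin_fscale lfun_fscale)

context fpctx
begin

abbreviation "MM \<equiv> Xmod C lm rm i"
abbreviation "FF \<equiv> FP C lm rm"

lemma car_FF: "car FF = UNIV \<times> qspace GG NN" by (simp add: FP_def Let_def)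
lemma add_FF[simp]: "add FF (b, c) (b', c') = (b + b', qadd NN c c')" by (simp add: FP_def Let_def)
lemma scl_FF[simp]: "scl FF z (b, c) = (z *\<^sub>C b, qscl NN z c)" by (simp add: FP_def Let_def)
lemma lac_FF[simp]: "lac FF a (b, c) = (a * b, qmap NN (lin_ext (Lg lm a)) c)"
  by (simp add: FP_def Let_def Lg_def)
lemma rac_FF[simp]: "rac FF (b, c) a = (b * a, qmap NN (lin_ext (Rg rm a)) c)"
  by (simp add: FP_def Let_def Rg_def)

lemma car_MM: "car MM = UNIV \<times> C i" by (simp add: Xmod_def)
lemma add_MM[simp]: "add MM (b, x) (b', x') = (b + b', x + x')" by (simp add: Xmod_def)
lemma scl_MM[simp]: "scl MM z (b, x) = (z *\<^sub>C b, z *\<^sub>C x)" by (simp add: Xmod_def)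
lemma lac_MM[simp]: "lac MM a (b, x) = (a * b, lm i a x)" by (simp add: Xmod_def)
lemma rac_MM[simp]: "rac MM (b, x) a = (b * a, rm i x a)" by (simp add: Xmod_def)

lemma GG_len: "(w, xs) \<in> GG \<Longrightarrow> length xs = length w \<and> w \<noteq> []" by (simp add: GG_def2)
lemma GG_nth: "(w, xs) \<in> GG \<Longrightarrow> k < length w \<Longrightarrow> xs ! k \<in> C (w ! k)" by (simp add: GG_def2)

lemma Lg_upd1_0: "(w, xs) \<in> GG \<Longrightarrow> Lg lm a (w, xs[0 := v]) = delta (w, xs[0 := lm (w ! 0) a v])"
  using GG_len[of w xs] by (cases xs; cases w) (auto simp: Lg_def)

lemma Lg_upd1_pos: "(w, xs) \<in> GG \<Longrightarrow> k \<noteq> 0 \<Longrightarrow>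
  Lg lm a (w, xs[k := v]) = delta (w, xs[0 := lm (w ! 0) a (xs ! 0), k := v])"
  using GG_len[of w xs] by (cases xs; cases w; cases k) (auto simp: Lg_def list_update_swap)

lemma Lg_upd2_0: "(w, xs) \<in> GG \<Longrightarrow>
  Lg lm a (w, xs[0 := v, Suc 0 := v']) = delta (w, xs[0 := lm (w ! 0) a v, Suc 0 := v'])"
  using GG_len[of w xs] by (cases xs; cases w) (auto simp: Lg_def)

lemma Lg_upd2_pos: "(w, xs) \<in> GG \<Longrightarrow> k \<noteq> 0 \<Longrightarrow>
  Lg lm a (w, xs[k := v, Suc k := v']) = delta (w, xs[0 := lm (w ! 0) a (xs ! 0), k := v, Suc k := v'])"
  using GG_len[of w xs] by (cases xs; cases w; cases k) (auto simp: Lg_def list_update_swap)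

lemma Rg_upd1_last: "(w, xs) \<in> GG \<Longrightarrow>
  Rg rm a (w, xs[length w - Suc 0 := v]) = delta (w, xs[length w - Suc 0 := rm (w ! (length w - Suc 0)) v a])"
  using GG_len[of w xs] by (cases "xs = []") (auto simp: Rg_def last_list_update last_conv_nth)

lemma Rg_upd1_nl: "(w, xs) \<in> GG \<Longrightarrow> k \<noteq> length w - Suc 0 \<Longrightarrow>
  Rg rm a (w, xs[k := v]) = delta (w, xs[length w - Suc 0 := rm (w ! (length w - Suc 0)) (xs ! (length w - Suc 0)) a, k := v])"
  using GG_len[of w xs] by (cases "xs = []") (auto simp: Rg_def last_list_update last_conv_nth list_update_swap)

lemma Rg_upd2_last: "(w, xs) \<in> GG \<Longrightarrow> Suc k = length w - 1 \<Longrightarrow>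
  Rg rm a (w, xs[k := v, Suc k := v']) = delta (w, xs[k := v, Suc k := rm (w ! Suc k) v' a])"
  using GG_len[of w xs] by (cases "xs = []") (auto simp: Rg_def last_list_update last_conv_nth)

lemma Rg_upd2_nl: "(w, xs) \<in> GG \<Longrightarrow> Suc k < length w \<Longrightarrow> Suc k \<noteq> length w - Suc 0 \<Longrightarrow>
  Rg rm a (w, xs[k := v, Suc k := v']) = delta (w, xs[length w - Suc 0 := rm (w ! (length w - Suc 0)) (xs ! (length w - Suc 0)) a, k := v, Suc k := v'])"
  using GG_len[of w xs] by (cases "xs = []") (auto simp: Rg_def last_list_update last_conv_nth list_update_swap)

lemma L_N: "n \<in> NN \<Longrightarrow> lin_ext (Lg lm a) n \<in> NN"
proof (rule N_lin_ext[where S'=RR, unfolded N_eq[symmetric]])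
  fix w xs k x y assume g: "(w, xs) \<in> GG" and k: "k < length w" and x: "x \<in> C (w ! k)" and y: "y \<in> C (w ! k)"
  show "lin_ext (Lg lm a) (fsub (fsub (delta (w, xs[k := x + y])) (delta (w, xs[k := x]))) (delta (w, xs[k := y]))) \<in> NN"
  proof (cases "k = 0")
    case True
    then show ?thesis using N_gen1[OF g k Clm[OF x, of a] Clm[OF y, of a]] x y
      by (simp add: lin_ext_d3 Lg_upd1_0[OF g] True lm_addx)
  next
    case False
    have g': "(w, xs[0 := lm (w ! 0) a (xs ! 0)]) \<in> GG"
      using GG_upd[OF g, of 0] GG_nth[OF g, of 0] GG_len[OF g] by auto
    show ?thesis using N_gen1[OF g' k, of x y] x y False
      by (simp add: lin_ext_d3 Lg_upd1_pos[OF g False] nth_list_update)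
  qed
next
  fix w xs k x z assume g: "(w, xs) \<in> GG" and k: "k < length w" and x: "x \<in> C (w ! k)"
  show "lin_ext (Lg lm a) (fsub (delta (w, xs[k := z *\<^sub>C x])) (fscale z (delta (w, xs[k := x])))) \<in> NN"
  proof (cases "k = 0")
    case True
    then show ?thesis using N_gen2[OF g k Clm[OF x, of a], of z] x
      by (simp add: lin_ext_ds Lg_upd1_0[OF g] True lm_sclx)
  next
    case False
    have g': "(w, xs[0 := lm (w ! 0) a (xs ! 0)]) \<in> GG"
      using GG_upd[OF g, of 0] GG_nth[OF g, of 0] GG_len[OF g] by auto
    show ?thesis using N_gen2[OF g' k, of x z] x False
      by (simp add: lin_ext_ds Lg_upd1_pos[OF g False] nth_list_update)
  qed
next
  fix w xs k x y b assume g: "(w, xs) \<in> GG" and k: "Suc k < length w" and x: "x \<in> C (w ! k)" and y: "y \<in> C (w ! Suc k)"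
  show "lin_ext (Lg lm a) (fsub (delta (w, xs[k := rm (w ! k) x b, Suc k := y])) (delta (w, xs[k := x, Suc k := lm (w ! Suc k) b y]))) \<in> NN"
  proof (cases "k = 0")
    case True
    then show ?thesis using N_gen3[OF g k Clm[OF x, of a] y, of b] x y
      by (simp add: lin_ext_d2 Lg_upd2_0[OF g] True lm_rm)
  next
    case False
    have g': "(w, xs[0 := lm (w ! 0) a (xs ! 0)]) \<in> GG"
      using GG_upd[OF g, of 0] GG_nth[OF g, of 0] GG_len[OF g] by auto
    show ?thesis using N_gen3[OF g' k x y, of b] False
      by (simp add: lin_ext_d2 Lg_upd2_pos[OF g False])
  qed
qed

lemma R_N: "n \<in> NN \<Longrightarrow> lin_ext (Rg rm a) n \<in> NN"
proof (rule N_lin_ext[where S'=RR, unfolded N_eq[symmetric]])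
  fix w xs k x y assume g: "(w, xs) \<in> GG" and k: "k < length w" and x: "x \<in> C (w ! k)" and y: "y \<in> C (w ! k)"
  show "lin_ext (Rg rm a) (fsub (fsub (delta (w, xs[k := x + y])) (delta (w, xs[k := x]))) (delta (w, xs[k := y]))) \<in> NN"
  proof (cases "k = length w - 1")
    case True
    then show ?thesis using N_gen1[OF g k Crm[OF x, of a] Crm[OF y, of a]] x y
      by (simp add: lin_ext_d3 Rg_upd1_last[OF g] True rm_addx)
  next
    case False
    have g': "(w, xs[length w - 1 := rm (w ! (length w - 1)) (xs ! (length w - 1)) a]) \<in> GG"
      using GG_upd[OF g, of "length w - 1"] GG_nth[OF g, of "length w - 1"] GG_len[OF g] by auto
    show ?thesis using N_gen1[OF g' k, of x y] x y False
      by (simp add: lin_ext_d3 Rg_upd1_nl[OF g] False)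
  qed
next
  fix w xs k x z assume g: "(w, xs) \<in> GG" and k: "k < length w" and x: "x \<in> C (w ! k)"
  show "lin_ext (Rg rm a) (fsub (delta (w, xs[k := z *\<^sub>C x])) (fscale z (delta (w, xs[k := x])))) \<in> NN"
  proof (cases "k = length w - 1")
    case True
    then show ?thesis using N_gen2[OF g k Crm[OF x, of a], of z] x
      by (simp add: lin_ext_ds Rg_upd1_last[OF g] True rm_sclx)
  next
    case False
    have g': "(w, xs[length w - 1 := rm (w ! (length w - 1)) (xs ! (length w - 1)) a]) \<in> GG"
      using GG_upd[OF g, of "length w - 1"] GG_nth[OF g, of "length w - 1"] GG_len[OF g] by auto
    show ?thesis using N_gen2[OF g' k, of x z] x False
      by (simp add: lin_ext_ds Rg_upd1_nl[OF g] False)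
  qed
next
  fix w xs k x y b assume g: "(w, xs) \<in> GG" and k: "Suc k < length w" and x: "x \<in> C (w ! k)" and y: "y \<in> C (w ! Suc k)"
  show "lin_ext (Rg rm a) (fsub (delta (w, xs[k := rm (w ! k) x b, Suc k := y])) (delta (w, xs[k := x, Suc k := lm (w ! Suc k) b y]))) \<in> NN"
  proof (cases "Suc k = length w - 1")
    case True
    show ?thesis unfolding lin_ext_d2 Rg_upd2_last[OF g True] using N_gen3[OF g k x Crm[OF y, of a], of b] x y
      by (simp add: lm_rm)
  next
    case False
    have g': "(w, xs[length w - 1 := rm (w ! (length w - 1)) (xs ! (length w - 1)) a]) \<in> GG"
      using GG_upd[OF g, of "length w - 1"] GG_nth[OF g, of "length w - 1"] GG_len[OF g] by auto
    show ?thesis using N_gen3[OF g' k x y, of b] False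
      by (simp add: lin_ext_d2 Rg_upd2_nl[OF g k] False)
  qed
qed

end



lemma Fr_delta: "Fr i (delta (w, xs)) = (if w = [i] then delta (w, xs) else (\<lambda>_. 0))"
  unfolding Fr_def delta_def by (rule ext) (auto split: prod.splits)
lemma Fr_fsub: "Fr i (fsub f g) = fsub (Fr i f) (Fr i g)"
  by (rule ext) (auto simp: Fr_def fsub_def)
lemma Fr_fscale: "Fr i (fscale z f) = fscale z (Fr i f)"
  by (rule ext) (auto simp: Fr_def fscale_def)
lemma fsub_zero: "fsub (\<lambda>_. 0) (\<lambda>_. 0) = (\<lambda>_. 0)" by (simp add: fsub_def)
lemma fscale_zero: "fscale z (\<lambda>_. 0) = (\<lambda>_. 0)" by (simp add: fscale_def)

lemma sum_delta_self: "fin f \<Longrightarrow> (\<Sum>g\<in>{g. f g \<noteq> 0}. f g * delta g h) = f h"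
proof -
  assume "fin f"
  have "(\<Sum>g\<in>{g. f g \<noteq> 0}. f g * delta g h) = (\<Sum>g\<in>{g. f g \<noteq> 0}. if g = h then f g else 0)"
    by (rule sum.cong) (auto simp: delta_def)
  also have "\<dots> = f h" using \<open>fin f\<close> by (simp add: sum.delta')
  finally show ?thesis .
qed

context fpctx
begin

lemma Fr_N: "n \<in> NN \<Longrightarrow> Fr i n \<in> NN"
proof -
  assume "n \<in> NN"
  then obtain m :: nat and c v where n: "n = (\<lambda>h. \<Sum>k<m. c k * v k h)" and vs: "\<forall>k<m. v k \<in> RR"
    unfolding N_eq cspan_iff by blast
  have e: "Fr i n = (\<lambda>h. \<Sum>k\<in>{..<m}. c k * Fr i (v k) h)"
    by (rule ext) (auto simp: n Fr_def)
  have d: "Fr i v = v \<or> Fr i v = (\<lambda>_. 0)" if "v \<in> RR" for v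
  proof -
    have "\<exists>w a b c. (v = fsub (fsub (delta (w, a)) (delta (w, b))) (delta (w, c))) \<or>
           (\<exists>z. v = fsub (delta (w, a)) (fscale z (delta (w, b)))) \<or> v = fsub (delta (w, a)) (delta (w, b))"
      using that unfolding Rgens_def by blast
    then obtain w a b c where "(v = fsub (fsub (delta (w, a)) (delta (w, b))) (delta (w, c))) \<or>
           (\<exists>z. v = fsub (delta (w, a)) (fscale z (delta (w, b)))) \<or> v = fsub (delta (w, a)) (delta (w, b))"
      by blast
    moreover have "Fr i (fsub (fsub (delta (w, a)) (delta (w, b))) (delta (w, c))) = (if w = [i] then fsub (fsub (delta (w, a)) (delta (w, b))) (delta (w, c)) else (\<lambda>_. 0))"
      by (cases "w = [i]") (simp_all only: Fr_fsub Fr_delta fsub_zero if_True if_False simp_thms)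
    moreover have "Fr i (fsub (delta (w, a)) (fscale z (delta (w, b)))) = (if w = [i] then fsub (delta (w, a)) (fscale z (delta (w, b))) else (\<lambda>_. 0))" for z
      by (cases "w = [i]") (simp_all only: Fr_fsub Fr_fscale Fr_delta fsub_zero fscale_zero if_True if_False simp_thms)
    moreover have "Fr i (fsub (delta (w, a)) (delta (w, b))) = (if w = [i] then fsub (delta (w, a)) (delta (w, b)) else (\<lambda>_. 0))"
      by (cases "w = [i]") (simp_all only: Fr_fsub Fr_delta fsub_zero if_True if_False simp_thms)
    ultimately show ?thesis by (cases "w = [i]") auto
  qed
  have "Fr i v \<in> cspan RR" if "v \<in> RR" for v
    using d[OF that] cspan_gen[OF that] cspan_zero[of RR] by auto
  then show ?thesis unfolding e N_eq by (intro cspan_sum) (use vs in auto)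
qed

end


context fpctx
begin

lemma sphi_C: "g \<in> GG \<Longrightarrow> s\<phi> i g \<in> C i"
  by (cases g) (auto simp: s\<phi>_def GG_single_iff)

lemma repr_aux: "finite K \<Longrightarrow> K \<subseteq> GG \<Longrightarrow> (\<Sum>g\<in>K. c g *\<^sub>C s\<phi> i g) \<in> C i \<and>
   fsub (\<lambda>h. \<Sum>g\<in>K. c g * Fr i (delta g) h) (delta ([i], [\<Sum>g\<in>K. c g *\<^sub>C s\<phi> i g])) \<in> NN"
proof (induction K rule: finite_induct)
  case empty
  have "fsub (delta ([i], [0][0 := 0 *\<^sub>C 0])) (fscale 0 (delta ([i], [0][0 := 0])))  \<in> NN"
    by (rule N_gen2) (auto simp: GG_single)
  then have "fscale (-1) (fsub (delta ([i], [0][0 := 0 *\<^sub>C 0])) (fscale 0 (delta ([i], [0][0 := 0])))) \<in> NN"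
    by (rule N_fscale)
  moreover have "fscale (-1) (fsub (delta ([i], [0][0 := 0 *\<^sub>C 0])) (fscale 0 (delta ([i], [0][0 := 0]))))
     = fsub (\<lambda>h. 0) (delta ([i], [0]))"
    by (rule ext) (simp add: fsub_def fscale_def)
  ultimately have "fsub (\<lambda>h. 0) (delta ([i], [0])) \<in> NN" by metis
  then show ?case by simp
next
  case (insert g K)
  let ?X = "\<Sum>g\<in>K. c g *\<^sub>C s\<phi> i g"
  let ?A = "\<lambda>h. \<Sum>g\<in>K. c g * Fr i (delta g) h"
  have IH: "?X \<in> C i" "fsub ?A (delta ([i], [?X])) \<in> NN" using insert by auto
  have gG: "g \<in> GG" using insert by auto
  obtain w xs where g: "g = (w, xs)" by fastforce
  show ?case
  proof (cases "w = [i]")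
    case False
    then have "s\<phi> i g = 0" "Fr i (delta g) = (\<lambda>_. 0)" by (auto simp: g s\<phi>_def Fr_delta)
    then show ?thesis using IH insert by simp
  next
    case True
    then obtain x where xs: "xs = [x]" and x: "x \<in> C i" using gG g GG_single_iff by auto
    have sg: "s\<phi> i g = x" "Fr i (delta g) = delta ([i], [x])" by (auto simp: g True xs s\<phi>_def Fr_delta)
    have cx: "c g *\<^sub>C x \<in> C i" using x by simp
    have r1: "fsub (fsub (delta ([i], [?X + c g *\<^sub>C x])) (delta ([i], [?X]))) (delta ([i], [c g *\<^sub>C x])) \<in> NN"
      using N_gen1[OF GG_single[OF IH(1)], of 0 ?X "c g *\<^sub>C x"] IH(1) cx by simp
    have r2: "fsub (delta ([i], [c g *\<^sub>C x])) (fscale (c g) (delta ([i], [x]))) \<in> NN"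
      using N_gen2[OF GG_single[OF x], of 0 x "c g"] x by simp
    have s1: "(\<Sum>g\<in>insert g K. c g *\<^sub>C s\<phi> i g) = ?X + c g *\<^sub>C x"
      using insert(1,2) sg(1) by (simp add: add.commute)
    have s2: "(\<lambda>h. \<Sum>g\<in>insert g K. c g * Fr i (delta g) h) = (\<lambda>h. c g * delta ([i], [x]) h + ?A h)"
      using insert(1,2) sg(2) by simp
    have eqn: "fsub (\<lambda>h. c g * delta ([i], [x]) h + ?A h) (delta ([i], [?X + c g *\<^sub>C x]))
        = fsub (fsub (fsub ?A (delta ([i], [?X]))) (fsub (fsub (delta ([i], [?X + c g *\<^sub>C x])) (delta ([i], [?X]))) (delta ([i], [c g *\<^sub>C x]))))
             (fsub (delta ([i], [c g *\<^sub>C x])) (fscale (c g) (delta ([i], [x]))))"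
      unfolding fsub_def fscale_def by (rule ext) (simp only: algebra_simps)
    have "fsub (\<lambda>h. c g * delta ([i], [x]) h + ?A h) (delta ([i], [?X + c g *\<^sub>C x])) \<in> NN"
      unfolding eqn by (rule N_fsub[OF N_fsub[OF IH(2) r1] r2])
    moreover have "?X + c g *\<^sub>C x \<in> C i" using IH cx by simp
    ultimately show ?thesis unfolding s1 s2 by simp
  qed
qed

lemma repr: "f \<in> free_on GG \<Longrightarrow> lfun (s\<phi> i) f \<in> C i \<and> fsub (Fr i f) (delta ([i], [lfun (s\<phi> i) f])) \<in> NN"
proof -
  assume f: "f \<in> free_on GG"
  have K: "finite {g. f g \<noteq> 0}" "{g. f g \<noteq> 0} \<subseteq> GG" using f by (auto simp: free_on_def)
  have e: "Fr i f = (\<lambda>h. \<Sum>g\<in>{g. f g \<noteq> 0}. f g * Fr i (delta g) h)"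
  proof (rule ext)
    fix h
    show "Fr i f h = (\<Sum>g\<in>{g. f g \<noteq> 0}. f g * Fr i (delta g) h)"
      using sum_delta_self[OF K(1), of h] by (cases h) (auto simp: Fr_def delta_def)
  qed
  show ?thesis using repr_aux[OF K, of f] unfolding e lfun_def by simp
qed

end



context fpctx
begin

abbreviation "SS \<equiv> Xsub C lm rm i"
abbreviation "TT \<equiv> Ti_rel C lm rm i"
abbreviation "TG \<equiv> Tgens MM FF SS"

lemma T_eq: "TT = cspan TG" by (simp add: Ti_rel_def tens_rel_eq)

lemma T_gen1: "u \<in> car MM \<Longrightarrow> u' \<in> car MM \<Longrightarrow> v \<in> SS \<Longrightarrow>
   fsub (fsub (delta (add MM u u', v)) (delta (u, v))) (delta (u', v)) \<in> TT"
  unfolding T_eq by (rule cspan_gen) (unfold Tgens_def, blast)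
lemma T_gen2: "u \<in> car MM \<Longrightarrow> v \<in> SS \<Longrightarrow> v' \<in> SS \<Longrightarrow>
   fsub (fsub (delta (u, add FF v v')) (delta (u, v))) (delta (u, v')) \<in> TT"
  unfolding T_eq by (rule cspan_gen) (unfold Tgens_def, blast)
lemma T_gen3: "u \<in> car MM \<Longrightarrow> v \<in> SS \<Longrightarrow>
   fsub (delta (scl MM z u, v)) (fscale z (delta (u, v))) \<in> TT"
  unfolding T_eq by (rule cspan_gen) (unfold Tgens_def, blast)
lemma T_gen4: "u \<in> car MM \<Longrightarrow> v \<in> SS \<Longrightarrow>
   fsub (delta (u, scl FF z v)) (fscale z (delta (u, v))) \<in> TT"
  unfolding T_eq by (rule cspan_gen) (unfold Tgens_def, blast)
lemma T_gen5: "u \<in> car MM \<Longrightarrow> v \<in> SS \<Longrightarrow>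
   fsub (delta (rac MM u b, v)) (delta (u, lac FF b v)) \<in> TT"
  unfolding T_eq by (rule cspan_gen) (unfold Tgens_def, blast)

lemma T_zero: "(\<lambda>_. 0) \<in> TT" using cspan_zero T_eq by simp
lemma T_fsub: "u \<in> TT \<Longrightarrow> v \<in> TT \<Longrightarrow> fsub u v \<in> TT" using cspan_fsub T_eq by metis
lemma T_fplus: "u \<in> TT \<Longrightarrow> v \<in> TT \<Longrightarrow> fplus u v \<in> TT" using cspan_fplus T_eq by metis
lemma T_fin: "n \<in> TT \<Longrightarrow> fin n" using cspan_fin[OF Tgens_fin] T_eq by auto
lemma qclsT_eq: "fsub f g \<in> TT \<Longrightarrow> qcls TT f = qcls TT g"
  using qcls_eq[of f g TG] T_eq by simp
lemma qclsT_self: "f \<in> qcls TT f"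
  using qcls_self[of f TG] T_eq by simp

lemma T_lin_ext:
  assumes h1: "\<And>u u' v. u \<in> car MM \<Longrightarrow> u' \<in> car MM \<Longrightarrow> v \<in> SS \<Longrightarrow>
     lin_ext \<Phi> (fsub (fsub (delta (add MM u u', v)) (delta (u, v))) (delta (u', v))) \<in> TT"
  and h2: "\<And>u v v'. u \<in> car MM \<Longrightarrow> v \<in> SS \<Longrightarrow> v' \<in> SS \<Longrightarrow>
     lin_ext \<Phi> (fsub (fsub (delta (u, add FF v v')) (delta (u, v))) (delta (u, v'))) \<in> TT"
  and h3: "\<And>u v z. u \<in> car MM \<Longrightarrow> v \<in> SS \<Longrightarrow>
     lin_ext \<Phi> (fsub (delta (scl MM z u, v)) (fscale z (delta (u, v)))) \<in> TT"
  and h4: "\<And>u v z. u \<in> car MM \<Longrightarrow> v \<in> SS \<Longrightarrow>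
     lin_ext \<Phi> (fsub (delta (u, scl FF z v)) (fscale z (delta (u, v)))) \<in> TT"
  and h5: "\<And>u v b. u \<in> car MM \<Longrightarrow> v \<in> SS \<Longrightarrow>
     lin_ext \<Phi> (fsub (delta (rac MM u b, v)) (delta (u, lac FF b v))) \<in> TT"
  and t: "t \<in> TT"
  shows "lin_ext \<Phi> t \<in> TT"
proof -
  have "lin_ext \<Phi> t \<in> cspan TG"
  proof (rule lin_ext_cspan[of TG])
    show "\<forall>v\<in>TG. fin v" by (rule Tgens_fin)
    show "\<forall>v\<in>TG. lin_ext \<Phi> v \<in> cspan TG"
      unfolding T_eq[symmetric] using h1 h2 h3 h4 h5 by (unfold Tgens_def) blast
    show "t \<in> cspan TG" using t T_eq by simp
  qed
  then show ?thesis using T_eq by simp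
qed

lemma T_lfun:
  assumes h1: "\<And>u u' v. u \<in> car MM \<Longrightarrow> u' \<in> car MM \<Longrightarrow> v \<in> SS \<Longrightarrow>
     \<phi> (add MM u u', v) - \<phi> (u, v) - \<phi> (u', v) = 0"
  and h2: "\<And>u v v'. u \<in> car MM \<Longrightarrow> v \<in> SS \<Longrightarrow> v' \<in> SS \<Longrightarrow>
     \<phi> (u, add FF v v') - \<phi> (u, v) - \<phi> (u, v') = 0"
  and h3: "\<And>u v z. u \<in> car MM \<Longrightarrow> v \<in> SS \<Longrightarrow>
     \<phi> (scl MM z u, v) - z *\<^sub>C \<phi> (u, v) = 0"
  and h4: "\<And>u v z. u \<in> car MM \<Longrightarrow> v \<in> SS \<Longrightarrow>
     \<phi> (u, scl FF z v) - z *\<^sub>C \<phi> (u, v) = 0"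
  and h5: "\<And>u v b. u \<in> car MM \<Longrightarrow> v \<in> SS \<Longrightarrow>
     \<phi> (rac MM u b, v) - \<phi> (u, lac FF b v) = 0"
  and t: "t \<in> TT"
  shows "lfun \<phi> t = 0"
proof (rule lfun_cspan[of TG])
  show "\<forall>v\<in>TG. fin v" by (rule Tgens_fin)
  show "\<forall>v\<in>TG. lfun \<phi> v = 0"
    unfolding Tgens_def using h1 h2 h3 h4 h5 by (auto simp: lfun_d3 lfun_d2 lfun_ds)
  show "t \<in> cspan TG" using t T_eq by simp
qed

lemma qspace_mem: "f \<in> free_on GG \<Longrightarrow> qcls NN f \<in> qspace GG NN"
  by (simp add: qspace_def)

lemma zero_free_on: "(\<lambda>_. 0) \<in> free_on G" by (simp add: free_on_def)

lemma S_one: "(b, NN) \<in> SS"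
proof -
  have "NN = qcls NN (\<lambda>_. 0)" by (simp add: qcls_zero)
  then have "NN \<in> qspace GG NN" using qspace_mem[OF zero_free_on] by simp
  moreover have "(\<lambda>_. 0) \<in> NN" by (rule N_zero)
  ultimately show ?thesis unfolding Xsub_def using zero_free_on by blast
qed

lemma S_cls: "(w, xs) \<in> GG \<Longrightarrow> hd w \<noteq> i \<Longrightarrow> (b, qcls NN (delta (w, xs))) \<in> SS"
proof -
  assume g: "(w, xs) \<in> GG" "hd w \<noteq> i"
  have "delta (w, xs) \<in> free_on {(w, xs) \<in> GG. hd w \<noteq> i}" by (rule delta_free_on) (use g in simp)
  moreover have "delta (w, xs) \<in> qcls NN (delta (w, xs))" by (simp add: qcls_def fsub_self N_zero)
  ultimately show ?thesis unfolding Xsub_def using qspace_mem[OF delta_free_on[OF g(1)]] by blast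
qed

lemma Vg_ni: "hd w \<noteq> i \<Longrightarrow> V_gen C lm rm i (w, xs) = delta ((1, 0), (0, qcls NN (delta (w, xs))))"
  by (simp add: V_gen_def Let_def)
lemma Vg_i1: "hd w = i \<Longrightarrow> tl w = [] \<Longrightarrow> V_gen C lm rm i (w, xs) = delta ((0, hd xs), (1, NN))"
  by (simp add: V_gen_def Let_def)
lemma Vg_i2: "hd w = i \<Longrightarrow> tl w \<noteq> [] \<Longrightarrow> V_gen C lm rm i (w, xs) = delta ((0, hd xs), (0, qcls NN (delta (tl w, tl xs))))"
  by (simp add: V_gen_def Let_def)

lemma GG_tl2: "(w, xs) \<in> GG \<Longrightarrow> tl w \<noteq> [] \<Longrightarrow> (tl w, tl xs) \<in> GG \<and> hd (tl w) \<noteq> hd w"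
  using GG_tl[of "hd w" "tl w" "hd xs" "tl xs"] GG_len[of w xs]
  by (cases w; cases xs) auto

lemma GG_hd: "(w, xs) \<in> GG \<Longrightarrow> hd xs \<in> C (hd w)"
  using GG_nth[of w xs 0] GG_len[of w xs] by (cases w; cases xs) auto

lemma hd_upd0: "xs \<noteq> [] \<Longrightarrow> hd (xs[0 := v]) = v" by (cases xs) auto
lemma tl_upd0: "tl (xs[0 := v]) = tl xs" by (cases xs) auto
lemma hd_updS: "xs \<noteq> [] \<Longrightarrow> hd (xs[Suc k := v]) = hd xs" by (cases xs) auto
lemma tl_updS: "tl (xs[Suc k := v]) = (tl xs)[k := v]" by (cases xs) auto

lemma cls_eq_zero: "fsub f g \<in> NN \<Longrightarrow> fsub (delta (u, (b, qcls NN f))) (delta (u, (b, qcls NN g))) \<in> TT"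
  using qclsN_eq[of f g] by (simp add: fsub_self T_zero)

lemma T_add2: "u \<in> car MM \<Longrightarrow> (w, ys) \<in> GG \<Longrightarrow> hd w \<noteq> i \<Longrightarrow> k < length w \<Longrightarrow> x \<in> C (w ! k) \<Longrightarrow> y \<in> C (w ! k) \<Longrightarrow>
  fsub (fsub (delta (u, (0, qcls NN (delta (w, ys[k := x + y]))))) (delta (u, (0, qcls NN (delta (w, ys[k := x]))))))
     (delta (u, (0, qcls NN (delta (w, ys[k := y]))))) \<in> TT"
proof -
  assume u: "u \<in> car MM" and g: "(w, ys) \<in> GG" "hd w \<noteq> i" and k: "k < length w" and x: "x \<in> C (w ! k)" and y: "y \<in> C (w ! k)"
  have gx: "(w, ys[k := x]) \<in> GG" "(w, ys[k := y]) \<in> GG" using GG_upd g k x y by auto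
  have "fsub (delta (w, ys[k := x + y])) (fplus (delta (w, ys[k := x])) (delta (w, ys[k := y])))
     = fsub (fsub (delta (w, ys[k := x + y])) (delta (w, ys[k := x]))) (delta (w, ys[k := y]))"
    by (rule ext) (simp add: fsub_def fplus_def)
  then have c: "qcls NN (delta (w, ys[k := x + y])) = qcls NN (fplus (delta (w, ys[k := x])) (delta (w, ys[k := y])))"
    using qclsN_eq N_gen1[OF g(1) k x y] by metis
  have "add FF (0, qcls NN (delta (w, ys[k := x]))) (0, qcls NN (delta (w, ys[k := y])))
      = (0, qcls NN (delta (w, ys[k := x + y])))"
    unfolding c by (simp add: qaddN)
  then show ?thesis using T_gen2[OF u S_cls[OF gx(1) g(2), of 0] S_cls[OF gx(2) g(2), of 0]] by simp
qed

lemma qsclN: "qscl NN z (qcls NN f) = qcls NN (fscale z f)"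
proof -
  have "qmap (cspan RR) (fscale z) (qcls NN f) = qcls (cspan RR) (fscale z f)"
  proof (rule qmap_qcls)
    fix f' assume "fsub f' f \<in> NN"
    from N_fscale[OF this, of z] show "fsub (fscale z f') (fscale z f) \<in> cspan RR"
      using N_eq by (simp add: fsub_def fscale_def right_diff_distrib)
  qed (rule N_zero)
  then show ?thesis using N_eq by (simp add: qscl_def)
qed

lemma T_scl2: "u \<in> car MM \<Longrightarrow> (w, ys) \<in> GG \<Longrightarrow> hd w \<noteq> i \<Longrightarrow> k < length w \<Longrightarrow> x \<in> C (w ! k) \<Longrightarrow>
  fsub (delta (u, (0, qcls NN (delta (w, ys[k := z *\<^sub>C x]))))) (fscale z (delta (u, (0, qcls NN (delta (w, ys[k := x])))))) \<in> TT"
proof -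
  assume u: "u \<in> car MM" and g: "(w, ys) \<in> GG" "hd w \<noteq> i" and k: "k < length w" and x: "x \<in> C (w ! k)"
  have gx: "(w, ys[k := x]) \<in> GG" using GG_upd g k x by auto
  have "scl FF z (0, qcls NN (delta (w, ys[k := x]))) = (0, qcls NN (delta (w, ys[k := z *\<^sub>C x])))"
    using qsclN qclsN_eq[OF N_gen2[OF g(1) k x, of z]] by simp
  then show ?thesis using T_gen4[OF u S_cls[OF gx(1) g(2), of 0], of z] by simp
qed

lemma one_S: "(1::'b, NN) \<in> SS" by (rule S_one)

lemma Vg_T: "n \<in> NN \<Longrightarrow> lin_ext (V_gen C lm rm i) n \<in> TT"
proof (rule N_lin_ext[where S'=TG, unfolded T_eq[symmetric]])
  fix w xs k x y assume g: "(w, xs) \<in> GG" and k: "k < length w" and x: "x \<in> C (w ! k)" and y: "y \<in> C (w ! k)"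
  have ne: "xs \<noteq> []" "w \<noteq> []" using GG_len[OF g] by auto
  show "lin_ext (V_gen C lm rm i) (fsub (fsub (delta (w, xs[k := x + y])) (delta (w, xs[k := x]))) (delta (w, xs[k := y]))) \<in> TT"
  proof (cases "hd w = i")
    case False
    then show ?thesis unfolding lin_ext_d3 using T_add2[of "(1, 0)", OF _ g False k x y] by (simp add: Vg_ni car_MM)
  next
    case hi: True
    have x': "x \<in> C (w ! k)" "y \<in> C (w ! k)" using x y by auto
    show ?thesis
    proof (cases k)
      case 0
      then have xy: "x \<in> C i" "y \<in> C i" using x y hi ne by (auto simp: hd_conv_nth)
      show ?thesis
      proof (cases "tl w = []")
        case True
        then show ?thesis unfolding lin_ext_d3 using T_gen1[of "(0, x)" "(0, y)" "(1, NN)"] xy one_S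
          by (simp add: Vg_i1[OF hi True] hd_upd0 ne 0 car_MM)
      next
        case False
        have gt: "(tl w, tl xs) \<in> GG" "hd (tl w) \<noteq> i" using GG_tl2[OF g False] hi by auto
        show ?thesis unfolding lin_ext_d3
          using T_gen1[of "(0, x)" "(0, y)" "(0, qcls NN (delta (tl w, tl xs)))"] xy S_cls[OF gt]
          by (simp add: Vg_i2[OF hi False] hd_upd0 tl_upd0 ne 0 car_MM)
      qed
    next
      case (Suc k')
      have False': "tl w \<noteq> []" using k Suc ne by (cases w) auto
      have gt: "(tl w, tl xs) \<in> GG" "hd (tl w) \<noteq> i" using GG_tl2[OF g False'] hi by auto
      have k': "k' < length (tl w)" "tl w ! k' = w ! k" using k Suc ne by (cases w; simp)+
      have hx: "(0, hd xs) \<in> car MM" using GG_hd[OF g] hi by (simp add: car_MM)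
      show ?thesis unfolding lin_ext_d3
        using T_add2[OF hx gt k'(1), of x y] x y k'(2)
        by (simp add: Vg_i2[OF hi False'] hd_updS tl_updS ne Suc)
    qed
  qed
next
  fix w xs k x z assume g: "(w, xs) \<in> GG" and k: "k < length w" and x: "x \<in> C (w ! k)"
  have ne: "xs \<noteq> []" "w \<noteq> []" using GG_len[OF g] by auto
  show "lin_ext (V_gen C lm rm i) (fsub (delta (w, xs[k := z *\<^sub>C x])) (fscale z (delta (w, xs[k := x])))) \<in> TT"
  proof (cases "hd w = i")
    case False
    then show ?thesis unfolding lin_ext_ds using T_scl2[of "(1, 0)", OF _ g False k x, of z] by (simp add: Vg_ni car_MM)
  next
    case hi: True
    show ?thesis
    proof (cases k)
      case 0
      then have xy: "x \<in> C i" using x hi ne by (auto simp: hd_conv_nth)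
      show ?thesis
      proof (cases "tl w = []")
        case True
        then show ?thesis unfolding lin_ext_ds using T_gen3[of "(0, x)" "(1, NN)" z] xy one_S
          by (simp add: Vg_i1[OF hi True] hd_upd0 ne 0 car_MM)
      next
        case False
        have gt: "(tl w, tl xs) \<in> GG" "hd (tl w) \<noteq> i" using GG_tl2[OF g False] hi by auto
        show ?thesis unfolding lin_ext_ds
          using T_gen3[of "(0, x)" "(0, qcls NN (delta (tl w, tl xs)))" z] xy S_cls[OF gt]
          by (simp add: Vg_i2[OF hi False] hd_upd0 tl_upd0 ne 0 car_MM)
      qed
    next
      case (Suc k')
      have False': "tl w \<noteq> []" using k Suc ne by (cases w) auto
      have gt: "(tl w, tl xs) \<in> GG" "hd (tl w) \<noteq> i" using GG_tl2[OF g False'] hi by auto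
      have k': "k' < length (tl w)" "tl w ! k' = w ! k" using k Suc ne by (cases w; simp)+
      have hx: "(0, hd xs) \<in> car MM" using GG_hd[OF g] hi by (simp add: car_MM)
      show ?thesis unfolding lin_ext_ds
        using T_scl2[OF hx gt k'(1), of x z] x k'(2)
        by (simp add: Vg_i2[OF hi False'] hd_updS tl_updS ne Suc)
    qed
  qed
next
  fix w xs k x y b assume g: "(w, xs) \<in> GG" and k: "Suc k < length w" and x: "x \<in> C (w ! k)" and y: "y \<in> C (w ! Suc k)"
  have ne: "xs \<noteq> []" "w \<noteq> []" using GG_len[OF g] by auto
  show "lin_ext (V_gen C lm rm i) (fsub (delta (w, xs[k := rm (w ! k) x b, Suc k := y])) (delta (w, xs[k := x, Suc k := lm (w ! Suc k) b y]))) \<in> TT"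
  proof (cases "hd w = i")
    case False
    then show ?thesis unfolding lin_ext_d2 using cls_eq_zero[OF N_gen3[OF g k x y, of b]] by (simp add: Vg_ni)
  next
    case hi: True
    have False': "tl w \<noteq> []" using k ne by (cases w) auto
    have gt: "(tl w, tl xs) \<in> GG" "hd (tl w) \<noteq> i" using GG_tl2[OF g False'] hi by auto
    show ?thesis
    proof (cases k)
      case 0
      have xi: "x \<in> C i" using x hi ne 0 by (auto simp: hd_conv_nth)
      have w1: "w ! Suc 0 = hd (tl w)" "w ! Suc 0 = tl w ! 0" using ne False' by (cases w; auto simp: hd_conv_nth)+
      have tl0: "tl (xs[0 := v, Suc 0 := v']) = (tl xs)[0 := v']" for v v' by (cases xs) auto
      have hd0: "hd (xs[0 := v, Suc 0 := v']) = v" for v v' using ne by (cases xs) auto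
      have gy: "(tl w, (tl xs)[0 := y]) \<in> GG" using GG_upd[OF gt(1), of 0 y] y w1 False' 0 k by simp
      have "lac FF b (0, qcls NN (delta (tl w, (tl xs)[0 := y]))) = (0, qcls NN (delta (tl w, (tl xs)[0 := lm (w ! Suc 0) b y])))"
        using qmap_lin_ext_N[OF L_N fin_delta, of b "(tl w, (tl xs)[0 := y])"] Lg_upd1_0[OF gt(1), of b y] w1
        by simp
      then show ?thesis unfolding lin_ext_d2
        using T_gen5[of "(0, x)" "(0, qcls NN (delta (tl w, (tl xs)[0 := y])))" b] xi S_cls[OF gy gt(2)]
        using hi ne by (simp add: Vg_i2[OF hi False'] tl0 hd0 0 car_MM hd_conv_nth)
    next
      case (Suc k')
      have k': "Suc k' < length (tl w)" "tl w ! k' = w ! k" "tl w ! Suc k' = w ! Suc k" using k Suc ne by (cases w; simp)+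
      have e: "xs[Suc k' := v, Suc (Suc k') := v'] = hd xs # (tl xs)[k' := v, Suc k' := v']" for v v'
        using ne by (cases xs) auto
      show ?thesis unfolding lin_ext_d2
        using cls_eq_zero[OF N_gen3[OF gt(1) k'(1), of x y b], of "(0, hd xs)" 0] x y k'
        by (simp add: Vg_i2[OF hi False'] e Suc)
    qed
  qed
qed

end



definition \<psi>B :: "('b::calg1 \<times> 'x) \<times> ('b \<times> 'c) \<Rightarrow> 'b" where "\<psi>B p = fst (fst p) * fst (snd p)"

context fpctx
begin

definition \<psi>X :: "('b \<times> 'x) \<times> ('b \<times> 'c) \<Rightarrow> 'x" where "\<psi>X p = rm i (snd (fst p)) (fst (snd p))"

definition emb :: "'b \<times> 'x \<Rightarrow> 'b \<times> ('i, 'x) fpq" where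
  "emb u = (fst u, qcls NN (delta ([i], [snd u])))"

definition Ag :: "('b \<times> 'x \<Rightarrow> 'b \<times> 'x) \<Rightarrow> ('b \<times> 'x) \<times> ('b \<times> ('i, 'x) fpq) \<Rightarrow> ('b \<times> 'x) \<times> ('b \<times> ('i, 'x) fpq) \<Rightarrow> complex" where
  "Ag a = (\<lambda>(u, v). delta (a u, v))"

lemma LopD:
  assumes "a \<in> Lop MM"
  shows "\<And>u. u \<in> car MM \<Longrightarrow> a u \<in> car MM"
    and "\<And>u u'. u \<in> car MM \<Longrightarrow> u' \<in> car MM \<Longrightarrow> a (add MM u u') = add MM (a u) (a u')"
    and "\<And>u z. u \<in> car MM \<Longrightarrow> a (scl MM z u) = scl MM z (a u)"
    and "\<And>u b. u \<in> car MM \<Longrightarrow> a (lac MM b u) = lac MM b (a u)"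
    and "\<And>u b. u \<in> car MM \<Longrightarrow> a (rac MM u b) = rac MM (a u) b"
  using assms unfolding Lop_def by auto

lemma A_T: "a \<in> Lop MM \<Longrightarrow> t \<in> TT \<Longrightarrow> lin_ext (Ag a) t \<in> TT"
proof (rule T_lin_ext)
  assume a: "a \<in> Lop MM"
  note L = LopD[OF a]
  show "lin_ext (Ag a) (fsub (fsub (delta (add MM u u', v)) (delta (u, v))) (delta (u', v))) \<in> TT"
    if "u \<in> car MM" "u' \<in> car MM" "v \<in> SS" for u u' v
    using T_gen1[OF L(1)[OF that(1)] L(1)[OF that(2)] that(3)] L(2)[OF that(1,2)]
    by (simp add: lin_ext_d3 Ag_def)
  show "lin_ext (Ag a) (fsub (fsub (delta (u, add FF v v')) (delta (u, v))) (delta (u, v'))) \<in> TT"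
    if "u \<in> car MM" "v \<in> SS" "v' \<in> SS" for u v v'
    using T_gen2[OF L(1)[OF that(1)] that(2,3)] by (simp add: lin_ext_d3 Ag_def)
  show "lin_ext (Ag a) (fsub (delta (scl MM z u, v)) (fscale z (delta (u, v)))) \<in> TT"
    if "u \<in> car MM" "v \<in> SS" for u v z
    using T_gen3[OF L(1)[OF that(1)] that(2), of z] L(3)[OF that(1)] by (simp add: lin_ext_ds Ag_def)
  show "lin_ext (Ag a) (fsub (delta (u, scl FF z v)) (fscale z (delta (u, v)))) \<in> TT"
    if "u \<in> car MM" "v \<in> SS" for u v z
    using T_gen4[OF L(1)[OF that(1)] that(2), of z] by (simp add: lin_ext_ds Ag_def)
  show "lin_ext (Ag a) (fsub (delta (rac MM u b, v)) (delta (u, lac FF b v))) \<in> TT"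
    if "u \<in> car MM" "v \<in> SS" for u v b
    using T_gen5[OF L(1)[OF that(1)] that(2), of b] L(5)[OF that(1)] by (simp add: lin_ext_d2 Ag_def)
qed

lemma Psi_T: "t \<in> TT \<Longrightarrow> lfun \<psi>B t = 0 \<and> lfun \<psi>X t = 0"
proof
  assume t: "t \<in> TT"
  show "lfun \<psi>B t = 0"
  proof (rule T_lfun[OF _ _ _ _ _ t])
    show "\<psi>B (add MM u u', v) - \<psi>B (u, v) - \<psi>B (u', v) = 0" for u u' v
      by (cases u; cases u') (simp add: \<psi>B_def distrib_right)
    show "\<psi>B (u, add FF v v') - \<psi>B (u, v) - \<psi>B (u, v') = 0" for u v v'
      by (cases v; cases v') (simp add: \<psi>B_def distrib_left)
    show "\<psi>B (scl MM z u, v) - z *\<^sub>C \<psi>B (u, v) = 0" for u v z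
      by (cases u) (simp add: \<psi>B_def mult_scaleC_left)
    show "\<psi>B (u, scl FF z v) - z *\<^sub>C \<psi>B (u, v) = 0" for u v z
      by (cases v) (simp add: \<psi>B_def mult_scaleC_right)
    show "\<psi>B (rac MM u b, v) - \<psi>B (u, lac FF b v) = 0" for u v b
      by (cases u; cases v) (simp add: \<psi>B_def mult.assoc)
  qed
  show "lfun \<psi>X t = 0"
  proof (rule T_lfun[OF _ _ _ _ _ t])
    show "\<psi>X (add MM u u', v) - \<psi>X (u, v) - \<psi>X (u', v) = 0" if "u \<in> car MM" "u' \<in> car MM" for u u' v
      using that by (cases u; cases u') (simp add: \<psi>X_def car_MM rm_addx)
    show "\<psi>X (u, add FF v v') - \<psi>X (u, v) - \<psi>X (u, v') = 0" if "u \<in> car MM" for u v v'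
      using that by (cases u; cases v; cases v') (simp add: \<psi>X_def car_MM rm_addb)
    show "\<psi>X (scl MM z u, v) - z *\<^sub>C \<psi>X (u, v) = 0" if "u \<in> car MM" for u v z
      using that by (cases u) (simp add: \<psi>X_def car_MM rm_sclx)
    show "\<psi>X (u, scl FF z v) - z *\<^sub>C \<psi>X (u, v) = 0" if "u \<in> car MM" for u v z
      using that by (cases u; cases v) (simp add: \<psi>X_def car_MM rm_sclb)
    show "\<psi>X (rac MM u b, v) - \<psi>X (u, lac FF b v) = 0" if "u \<in> car MM" for u v b
      using that by (cases u; cases v) (simp add: \<psi>X_def car_MM rm_rm)
  qed
qed

end



context fpctx
begin

abbreviation "one \<equiv> (1::'b, NN)"

lemma lfun_zero_fun[simp]: "lfun (\<lambda>g. 0) f = 0" by (simp add: lfun_def)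

lemma V_map_qcls: "fin f \<Longrightarrow> V_map C lm rm i (b, qcls NN f) = qcls TT (fplus (delta ((b, 0), one)) (lin_ext (V_gen C lm rm i) f))"
proof (rule set_eqI, rule iffI)
  fix g assume f: "fin f" and "g \<in> V_map C lm rm i (b, qcls NN f)"
  then obtain f' where f': "fsub f' f \<in> NN" and g: "fsub g (fplus (delta ((b, 0), one)) (lin_ext (V_gen C lm rm i) f')) \<in> TT"
    unfolding V_map_def qcls_def by auto
  have ff: "fin f'"
  proof -
    have "f' = fplus (fsub f' f) f" by (auto simp: fsub_def fplus_def)
    then show ?thesis using N_fin[OF f'] f by (metis fin_fplus)
  qed
  have "fsub (lin_ext (V_gen C lm rm i) f') (lin_ext (V_gen C lm rm i) f) \<in> TT"
    using Vg_T[OF f'] by (simp add: lin_ext_fsub ff f)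
  from T_fplus[OF g this]
  show "g \<in> qcls TT (fplus (delta ((b, 0), one)) (lin_ext (V_gen C lm rm i) f))"
    by (simp add: qcls_def fsub_def fplus_def algebra_simps)
next
  fix g assume "g \<in> qcls TT (fplus (delta ((b, 0), one)) (lin_ext (V_gen C lm rm i) f))"
  moreover have "f \<in> qcls NN f" by (simp add: qcls_def fsub_self N_zero)
  ultimately show "g \<in> V_map C lm rm i (b, qcls NN f)"
    unfolding V_map_def qcls_def by auto
qed

lemma Vemb: "x \<in> C i \<Longrightarrow> V_map C lm rm i (emb (b, x)) = qcls TT (delta ((b, x), one))"
proof -
  assume x: "x \<in> C i"
  have "V_map C lm rm i (emb (b, x)) = qcls TT (fplus (delta ((b, 0), one)) (delta ((0, x), one)))"
    by (simp add: emb_def V_map_qcls fin_delta Vg_i1)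
  also have "\<dots> = qcls TT (delta ((b, x), one))"
  proof (rule qclsT_eq[symmetric])
    have "fsub (delta ((b, x), one)) (fplus (delta ((b, 0), one)) (delta ((0, x), one)))
      = fsub (fsub (delta (add MM (b, 0) (0, x), one)) (delta ((b, 0), one))) (delta ((0, x), one))"
      by (rule ext) (simp add: fsub_def fplus_def)
    then show "fsub (delta ((b, x), one)) (fplus (delta ((b, 0), one)) (delta ((0, x), one))) \<in> TT"
      using T_gen1[of "(b, 0)" "(0, x)" one] x S_one by (simp add: car_MM)
  qed
  finally show ?thesis .
qed

lemma tensor_qcls: "a \<in> Lop MM \<Longrightarrow> fin g \<Longrightarrow> tensor_I C lm rm i a (qcls TT g) = qcls TT (lin_ext (Ag a) g)"
proof -
  assume a: "a \<in> Lop MM" and g: "fin g"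
  have e: "(\<lambda>(u, v). delta (a u, v)) = Ag a" by (simp add: Ag_def)
  have "qmap (cspan TG) (lin_ext (Ag a)) (qcls TT g) = qcls (cspan TG) (lin_ext (Ag a) g)"
  proof (rule qmap_qcls)
    fix f' assume f': "fsub f' g \<in> TT"
    have ff: "fin f'"
    proof -
      have "f' = fplus (fsub f' g) g" by (auto simp: fsub_def fplus_def)
      then show ?thesis using T_fin[OF f'] g by (metis fin_fplus)
    qed
    show "fsub (lin_ext (Ag a) f') (lin_ext (Ag a) g) \<in> cspan TG"
      using A_T[OF a f'] T_eq by (simp add: lin_ext_fsub ff g)
  qed (rule T_zero)
  then show ?thesis unfolding tensor_I_def e using T_eq by simp
qed

lemma Fr_P: "(\<lambda>f (w, xs). if w = [i] then f (w, xs) else 0) = Fr i"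
  by (rule ext)+ (simp add: Fr_def)

lemma P_qcls: "fin f \<Longrightarrow> P_i C lm rm i (b, qcls NN f) = (b, qcls NN (Fr i f))"
proof -
  have "qmap (cspan RR) (Fr i) (qcls NN f) = qcls (cspan RR) (Fr i f)"
  proof (rule qmap_qcls)
    fix f' assume "fsub f' f \<in> NN"
    from Fr_N[OF this] show "fsub (Fr i f') (Fr i f) \<in> cspan RR" using N_eq by (simp add: Fr_fsub)
  qed (rule N_zero)
  then show ?thesis unfolding P_i_def Fr_P using N_eq by simp
qed

abbreviation "sv f \<equiv> lfun (s\<phi> i) f"

lemma P_emb: "f \<in> free_on GG \<Longrightarrow> P_i C lm rm i (b, qcls NN f) = emb (b, sv f) \<and> sv f \<in> C i"
  using repr[of f] qclsN_eq[of "Fr i f" "delta ([i], [sv f])"]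
  by (simp add: P_qcls free_on_fin emb_def)

lemma emb_car: "x \<in> C i \<Longrightarrow> emb (b, x) \<in> car FF"
  by (simp add: emb_def car_FF qspace_mem delta_free_on GG_single)

lemma carFF_cases: "v \<in> car FF \<Longrightarrow> \<exists>b f. v = (b, qcls NN f) \<and> f \<in> free_on GG"
  by (cases v) (auto simp: car_FF qspace_def)

lemma fin_Vg: "fin (V_gen C lm rm i g)"
  by (cases g) (simp add: V_gen_def Let_def fin_delta)

lemma psiB_Vg: "lfun \<psi>B (V_gen C lm rm i g) = 0"
  by (cases g) (simp add: V_gen_def Let_def \<psi>B_def)

lemma psiX_Vg: "g \<in> GG \<Longrightarrow> lfun \<psi>X (V_gen C lm rm i g) = s\<phi> i g"
proof -
  assume g: "g \<in> GG"
  obtain w xs where gw: "g = (w, xs)" by fastforce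
  have gg: "(w, xs) \<in> GG" using g gw by simp
  have hx: "hd xs \<in> C (hd w)" using GG_hd[OF gg] .
  have ne: "w \<noteq> []" using GG_len[OF gg] by simp
  have w1: "(w = [i]) = (hd w = i \<and> tl w = [])" using ne by (cases w) auto
  show ?thesis using hx unfolding gw
    by (cases "hd w = i"; cases "tl w = []") (simp_all add: V_gen_def Let_def \<psi>X_def s\<phi>_def w1)
qed

lemma unique: "xt \<in> car FF \<Longrightarrow> U \<in> car MM \<Longrightarrow> V_map C lm rm i xt = qcls TT (delta (U, one)) \<Longrightarrow>
   P_i C lm rm i xt = emb U"
proof -
  assume xt: "xt \<in> car FF" and U: "U \<in> car MM" and V: "V_map C lm rm i xt = qcls TT (delta (U, one))"
  obtain b f where xf: "xt = (b, qcls NN f)" and f: "f \<in> free_on GG" using carFF_cases[OF xt] by blast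
  have ff: "fin f" using f by (rule free_on_fin)
  let ?g0 = "fplus (delta ((b, 0), one)) (lin_ext (V_gen C lm rm i) f)"
  have aV: "\<forall>g. fin (V_gen C lm rm i g)" using fin_Vg by blast
  have fg0: "fin ?g0" by (rule fin_fplus[OF fin_delta fin_lin_ext[OF ff aV]])
  have "?g0 \<in> V_map C lm rm i xt" unfolding xf V_map_qcls[OF ff] by (rule qclsT_self)
  then have "fsub ?g0 (delta (U, one)) \<in> TT" using V by (simp add: qcls_def)
  from Psi_T[OF this] have z: "lfun \<psi>B ?g0 = \<psi>B (U, one)" "lfun \<psi>X ?g0 = \<psi>X (U, one)"
    by (simp_all add: lfun_fsub fg0 fin_delta)
  have B: "lfun \<psi>B ?g0 = b"
    unfolding lfun_fplus[OF fin_delta fin_lin_ext[OF ff aV]] lfun_lin_ext[OF ff aV]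
    by (simp add: psiB_Vg \<psi>B_def)
  have "lfun (\<lambda>g. lfun \<psi>X (V_gen C lm rm i g)) f = sv f"
    by (rule lfun_cong) (use f psiX_Vg in \<open>auto simp: free_on_def\<close>)
  then have X: "lfun \<psi>X ?g0 = sv f"
    unfolding lfun_fplus[OF fin_delta fin_lin_ext[OF ff aV]] lfun_lin_ext[OF ff aV]
    by (simp add: \<psi>X_def)
  have "U = (b, sv f)" using z B X U by (cases U) (simp add: \<psi>B_def \<psi>X_def car_MM)
  then show ?thesis using P_emb[OF f] xf by simp
qed

lemma beta_formula: "a \<in> Lop MM \<Longrightarrow> f \<in> free_on GG \<Longrightarrow>
   beta_i C lm rm i a (b, qcls NN f) = emb (a (b, sv f))"
proof -
  assume a: "a \<in> Lop MM" and f: "f \<in> free_on GG"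
  let ?U = "(b, sv f)"
  have U: "?U \<in> car MM" using P_emb[OF f] by (simp add: car_MM)
  have aU: "a ?U \<in> car MM" using LopD(1)[OF a U] .
  obtain b1 x1 where aUe: "a ?U = (b1, x1)" and x1: "x1 \<in> C i" using aU by (cases "a ?U") (auto simp: car_MM)
  have P1: "P_i C lm rm i (b, qcls NN f) = emb ?U" using P_emb[OF f] by simp
  have V1: "V_map C lm rm i (emb ?U) = qcls TT (delta (?U, one))" using Vemb P_emb[OF f] by simp
  have T1: "tensor_I C lm rm i a (qcls TT (delta (?U, one))) = V_map C lm rm i (emb (a ?U))"
    using tensor_qcls[OF a fin_delta] Vemb[OF x1] aUe by (simp add: Ag_def)
  let ?xt = "inv_into (car FF) (V_map C lm rm i) (V_map C lm rm i (emb (a ?U)))"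
  have img: "V_map C lm rm i (emb (a ?U)) \<in> V_map C lm rm i ` car FF" using emb_car[OF x1] aUe by simp
  have xt: "?xt \<in> car FF" by (rule inv_into_into[OF img])
  have Vxt: "V_map C lm rm i ?xt = qcls TT (delta (a ?U, one))"
    using f_inv_into_f[OF img] Vemb[OF x1] aUe by simp
  have "beta_i C lm rm i a (b, qcls NN f) = P_i C lm rm i ?xt"
    unfolding beta_i_def lambda_i_def using P1 V1 T1 by simp
  also have "\<dots> = emb (a ?U)" by (rule unique[OF xt aU Vxt])
  finally show ?thesis .
qed

end



context fpctx
begin

lemma add_MM': "add MM p q = (fst p + fst q, snd p + snd q)" by (cases p; cases q) simp
lemma scl_MM': "scl MM z p = (z *\<^sub>C fst p, z *\<^sub>C snd p)" by (cases p) simp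
lemma lac_MM': "lac MM b p = (b * fst p, lm i b (snd p))" by (cases p) simp
lemma rac_MM': "rac MM p b = (fst p * b, rm i (snd p) b)" by (cases p) simp
lemma car_MM': "p \<in> car MM \<longleftrightarrow> snd p \<in> C i" by (cases p) (simp add: car_MM)

lemma delta_eq3: "fsub (delta ([i], [x + y])) (fplus (delta ([i], [x])) (delta ([i], [y])))
   = fsub (fsub (delta ([i], [x][0 := x + y])) (delta ([i], [x][0 := x]))) (delta ([i], [x][0 := y]))"
  by (rule ext) (simp add: fsub_def fplus_def)

lemma emb_add: "snd p \<in> C i \<Longrightarrow> snd q \<in> C i \<Longrightarrow> add FF (emb p) (emb q) = emb (add MM p q)"
proof -
  assume p: "snd p \<in> C i" and q: "snd q \<in> C i"
  have "qcls NN (delta ([i], [snd p + snd q])) = qcls NN (fplus (delta ([i], [snd p])) (delta ([i], [snd q])))"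
    by (rule qclsN_eq) (unfold delta_eq3, rule N_gen1, use p q GG_single in auto)
  then show ?thesis by (simp add: emb_def add_MM' qaddN)
qed

lemma emb_scl: "snd p \<in> C i \<Longrightarrow> scl FF z (emb p) = emb (scl MM z p)"
proof -
  assume p: "snd p \<in> C i"
  have "qcls NN (delta ([i], [z *\<^sub>C snd p])) = qcls NN (fscale z (delta ([i], [snd p])))"
    using qclsN_eq N_gen2[OF GG_single[OF p], of 0 "snd p" z] p by simp
  then show ?thesis by (simp add: emb_def scl_MM' qsclN)
qed

lemma emb_lac: "snd p \<in> C i \<Longrightarrow> lac FF b (emb p) = emb (lac MM b p)"
proof -
  assume p: "snd p \<in> C i"
  show ?thesis using qmap_lin_ext_N[OF L_N fin_delta, of b "([i], [snd p])"]
    by (simp add: emb_def lac_MM' Lg_def)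
qed

lemma emb_rac: "snd p \<in> C i \<Longrightarrow> rac FF (emb p) b = emb (rac MM p b)"
proof -
  assume p: "snd p \<in> C i"
  show ?thesis using qmap_lin_ext_N[OF R_N fin_delta, of b "([i], [snd p])"]
    by (simp add: emb_def rac_MM' Rg_def)
qed

lemma emb_car': "snd p \<in> C i \<Longrightarrow> emb p \<in> car FF"
  using emb_car[of "snd p" "fst p"] by simp

lemma sv_delta: "sv (delta ([i], [x])) = x" by (simp add: s\<phi>_def)

lemma Lg_GG: "g \<in> GG \<Longrightarrow> Lg lm b g \<in> free_on GG"
proof -
  assume g: "g \<in> GG"
  obtain w xs where gw: "g = (w, xs)" by fastforce
  have gg: "(w, xs) \<in> GG" using g gw by simp
  have ne: "w \<noteq> []" "xs \<noteq> []" using GG_len[OF gg] by auto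
  have "(w, xs[0 := lm (hd w) b (hd xs)]) \<in> GG"
    using GG_upd[OF gg, of 0 "lm (hd w) b (hd xs)"] GG_hd[OF gg] ne by (simp add: hd_conv_nth)
  then show ?thesis by (simp add: gw Lg_def delta_free_on)
qed

lemma Rg_GG: "g \<in> GG \<Longrightarrow> Rg rm b g \<in> free_on GG"
proof -
  assume g: "g \<in> GG"
  obtain w xs where gw: "g = (w, xs)" by fastforce
  have gg: "(w, xs) \<in> GG" using g gw by simp
  have ne: "w \<noteq> []" "xs \<noteq> []" "length xs = length w" using GG_len[OF gg] by auto
  have "xs ! (length w - 1) \<in> C (w ! (length w - 1))" using GG_nth[OF gg, of "length w - 1"] ne by simp
  then have "(w, xs[length xs - 1 := rm (last w) (last xs) b]) \<in> GG"
    using GG_upd[OF gg, of "length w - 1" "rm (last w) (last xs) b"] ne by (simp add: last_conv_nth)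
  then show ?thesis by (simp add: gw Rg_def delta_free_on)
qed

lemma sv_lm: "f \<in> free_on GG \<Longrightarrow> lm i b (sv f) = lfun (\<lambda>g. lm i b (s\<phi> i g)) f"
proof -
  assume f: "f \<in> free_on GG"
  have K: "finite {g. f g \<noteq> 0}" "{g. f g \<noteq> 0} \<subseteq> GG" using f by (auto simp: free_on_def)
  show ?thesis unfolding lfun_def by (rule lm_sum[OF K(1)]) (use K sphi_C in auto)
qed

lemma sv_rm: "f \<in> free_on GG \<Longrightarrow> rm i (sv f) b = lfun (\<lambda>g. rm i (s\<phi> i g) b) f"
proof -
  assume f: "f \<in> free_on GG"
  have K: "finite {g. f g \<noteq> 0}" "{g. f g \<noteq> 0} \<subseteq> GG" using f by (auto simp: free_on_def)
  show ?thesis unfolding lfun_def by (rule rm_sum[OF K(1)]) (use K sphi_C in auto)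
qed

lemma sv_L: "f \<in> free_on GG \<Longrightarrow> sv (lin_ext (Lg lm b) f) = lm i b (sv f)"
proof -
  assume f: "f \<in> free_on GG"
  have ff: "fin f" using f by (rule free_on_fin)
  have aL: "\<forall>g. fin (Lg lm b g)" by (auto simp: Lg_def fin_delta)
  have "sv (lin_ext (Lg lm b) f) = lfun (\<lambda>g. sv (Lg lm b g)) f" by (rule lfun_lin_ext[OF ff aL])
  also have "\<dots> = lfun (\<lambda>g. lm i b (s\<phi> i g)) f"
  proof (rule lfun_cong)
    fix g assume "f g \<noteq> 0"
    then have g: "g \<in> GG" using f unfolding free_on_def by blast
    obtain w xs where gw: "g = (w, xs)" by fastforce
    have ne: "xs \<noteq> []" using GG_len[of w xs] g gw by auto
    show "sv (Lg lm b g) = lm i b (s\<phi> i g)"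
      using ne by (cases xs) (auto simp: gw Lg_def s\<phi>_def)
  qed
  also have "\<dots> = lm i b (sv f)" using sv_lm[OF f] by simp
  finally show ?thesis .
qed

lemma sv_R: "f \<in> free_on GG \<Longrightarrow> sv (lin_ext (Rg rm b) f) = rm i (sv f) b"
proof -
  assume f: "f \<in> free_on GG"
  have ff: "fin f" using f by (rule free_on_fin)
  have aR: "\<forall>g. fin (Rg rm b g)" by (auto simp: Rg_def fin_delta)
  have "sv (lin_ext (Rg rm b) f) = lfun (\<lambda>g. sv (Rg rm b g)) f" by (rule lfun_lin_ext[OF ff aR])
  also have "\<dots> = lfun (\<lambda>g. rm i (s\<phi> i g) b) f"
  proof (rule lfun_cong)
    fix g assume "f g \<noteq> 0"
    then have g: "g \<in> GG" using f unfolding free_on_def by blast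
    obtain w xs where gw: "g = (w, xs)" by fastforce
    have ne: "length xs = length w" "w \<noteq> []" using GG_len[of w xs] g gw by auto
    show "sv (Rg rm b g) = rm i (s\<phi> i g) b"
    proof (cases "w = [i]")
      case True
      then obtain x where "xs = [x]" using ne by (cases xs) auto
      then show ?thesis by (simp add: gw Rg_def s\<phi>_def True)
    next
      case False
      then show ?thesis by (simp add: gw Rg_def s\<phi>_def)
    qed
  qed
  also have "\<dots> = rm i (sv f) b" using sv_rm[OF f] by simp
  finally show ?thesis .
qed

lemma Lop_comp: "a \<in> Lop MM \<Longrightarrow> a' \<in> Lop MM \<Longrightarrow> a \<circ> a' \<in> Lop MM"
  unfolding Lop_def by auto

lemma Lop_add: "a \<in> Lop MM \<Longrightarrow> a' \<in> Lop MM \<Longrightarrow> (\<lambda>u. add MM (a u) (a' u)) \<in> Lop MM"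
proof -
  assume a: "a \<in> Lop MM" and a': "a' \<in> Lop MM"
  note L = LopD[OF a] and L' = LopD[OF a']
  have c: "snd (a u) \<in> C i" "snd (a' u) \<in> C i" if "u \<in> car MM" for u
    using L(1)[OF that] L'(1)[OF that] by (simp_all add: car_MM')
  have cc: "add MM u u' \<in> car MM" if "u \<in> car MM" "u' \<in> car MM" for u u'
    using that by (simp add: car_MM' add_MM')
  show ?thesis unfolding Lop_def
  proof (intro CollectI conjI ballI allI)
    fix u assume u: "u \<in> car MM"
    show "add MM (a u) (a' u) \<in> car MM" using c[OF u] by (simp add: car_MM' add_MM')
    fix z show "add MM (a (scl MM z u)) (a' (scl MM z u)) = scl MM z (add MM (a u) (a' u))"
      using L(3)[OF u] L'(3)[OF u] by (simp add: add_MM' scl_MM' scaleC_add_right)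
  next
    fix u u' assume u: "u \<in> car MM" and u': "u' \<in> car MM"
    show "add MM (a (add MM u u')) (a' (add MM u u')) = add MM (add MM (a u) (a' u)) (add MM (a u') (a' u'))"
      using L(2)[OF u u'] L'(2)[OF u u'] by (simp add: add_MM' ac_simps)
  next
    fix b u assume u: "u \<in> car MM"
    show "add MM (a (lac MM b u)) (a' (lac MM b u)) = lac MM b (add MM (a u) (a' u))"
      using L(4)[OF u] L'(4)[OF u] c[OF u] by (simp add: add_MM' lac_MM' lm_addx distrib_left)
    show "add MM (a (rac MM u b)) (a' (rac MM u b)) = rac MM (add MM (a u) (a' u)) b"
      using L(5)[OF u] L'(5)[OF u] c[OF u] by (simp add: add_MM' rac_MM' rm_addx distrib_right)
  qed
qed

lemma Lop_scl: "a \<in> Lop MM \<Longrightarrow> (\<lambda>u. scl MM z (a u)) \<in> Lop MM"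
proof -
  assume a: "a \<in> Lop MM"
  note L = LopD[OF a]
  have c: "snd (a u) \<in> C i" if "u \<in> car MM" for u
    using L(1)[OF that] by (simp_all add: car_MM')
  show ?thesis unfolding Lop_def
  proof (intro CollectI conjI ballI allI)
    fix u assume u: "u \<in> car MM"
    show "scl MM z (a u) \<in> car MM" using c[OF u] by (simp add: car_MM' scl_MM')
    fix z' show "scl MM z (a (scl MM z' u)) = scl MM z' (scl MM z (a u))"
      using L(3)[OF u] by (simp add: scl_MM' scaleC_scaleC mult.commute)
  next
    fix u u' assume u: "u \<in> car MM" and u': "u' \<in> car MM"
    show "scl MM z (a (add MM u u')) = add MM (scl MM z (a u)) (scl MM z (a u'))"
      using L(2)[OF u u'] by (simp add: add_MM' scl_MM' scaleC_add_right)
  next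
    fix b u assume u: "u \<in> car MM"
    show "scl MM z (a (lac MM b u)) = lac MM b (scl MM z (a u))"
      using L(4)[OF u] c[OF u] by (simp add: scl_MM' lac_MM' lm_sclx mult_scaleC_right)
    show "scl MM z (a (rac MM u b)) = rac MM (scl MM z (a u)) b"
      using L(5)[OF u] c[OF u] by (simp add: scl_MM' rac_MM' rm_sclx mult_scaleC_left)
  qed
qed

end



context fpctx
begin

lemma beta_on: "a \<in> Lop MM \<Longrightarrow> v \<in> car FF \<Longrightarrow>
  \<exists>U. U \<in> car MM \<and> beta_i C lm rm i a v = emb (a U) \<and> (\<forall>a'\<in>Lop MM. beta_i C lm rm i a' v = emb (a' U))"
proof -
  assume a: "a \<in> Lop MM" and v: "v \<in> car FF"
  obtain b f where vf: "v = (b, qcls NN f)" and f: "f \<in> free_on GG" using carFF_cases[OF v] by blast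
  show ?thesis
    using beta_formula[OF _ f] a P_emb[OF f] by (intro exI[of _ "(b, sv f)"]) (simp add: vf car_MM)
qed

lemma beta_Lop: "a \<in> Lop MM \<Longrightarrow> beta_i C lm rm i a \<in> Lop FF"
proof -
  assume a: "a \<in> Lop MM"
  note L = LopD[OF a]
  have c: "snd (a u) \<in> C i" if "u \<in> car MM" for u using L(1)[OF that] by (simp add: car_MM')
  have bf: "beta_i C lm rm i a (b, qcls NN f) = emb (a (b, sv f))" if "f \<in> free_on GG" for b f
    by (rule beta_formula[OF a that])
  have U: "(b, sv f) \<in> car MM" if "f \<in> free_on GG" for b f using P_emb[OF that] by (simp add: car_MM)
  show ?thesis unfolding Lop_def
  proof (intro CollectI conjI ballI allI)
    fix u assume u: "u \<in> car FF"
    obtain b f where uf: "u = (b, qcls NN f)" and f: "f \<in> free_on GG" using carFF_cases[OF u] by blast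
    show "beta_i C lm rm i a u \<in> car FF" unfolding uf bf[OF f] by (rule emb_car'[OF c[OF U[OF f, of b]]])
    fix z
    have "scl FF z u = (z *\<^sub>C b, qcls NN (fscale z f))" by (simp add: uf qsclN)
    moreover have "sv (fscale z f) = z *\<^sub>C sv f" by (simp add: lfun_fscale free_on_fin[OF f])
    ultimately show "beta_i C lm rm i a (scl FF z u) = scl FF z (beta_i C lm rm i a u)"
      unfolding uf using bf[OF free_on_fscale[OF f, of z]] bf[OF f] emb_scl[OF c[OF U[OF f, of b]], of z] L(3)[OF U[OF f, of b], of z]
      by (simp add: uf)
  next
    fix u u' assume u: "u \<in> car FF" and u': "u' \<in> car FF"
    obtain b f where uf: "u = (b, qcls NN f)" and f: "f \<in> free_on GG" using carFF_cases[OF u] by blast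
    obtain b' f' where uf': "u' = (b', qcls NN f')" and f': "f' \<in> free_on GG" using carFF_cases[OF u'] by blast
    have "add FF u u' = (b + b', qcls NN (fplus f f'))" by (simp add: uf uf' qaddN)
    moreover have "sv (fplus f f') = sv f + sv f'" by (simp add: lfun_fplus free_on_fin[OF f] free_on_fin[OF f'])
    ultimately show "beta_i C lm rm i a (add FF u u') = add FF (beta_i C lm rm i a u) (beta_i C lm rm i a u')"
      using bf[OF free_on_fplus[OF f f']] bf[OF f] bf[OF f'] emb_add[OF c[OF U[OF f, of b]] c[OF U[OF f', of b']]]
        L(2)[OF U[OF f, of b] U[OF f', of b']]
      by (simp add: uf uf')
  next
    fix b0 u assume u: "u \<in> car FF"
    obtain b f where uf: "u = (b, qcls NN f)" and f: "f \<in> free_on GG" using carFF_cases[OF u] by blast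
    have fl: "lin_ext (Lg lm b0) f \<in> free_on GG" by (rule lin_ext_free_on[OF f Lg_GG])
    have fr: "lin_ext (Rg rm b0) f \<in> free_on GG" by (rule lin_ext_free_on[OF f Rg_GG])
    have "lac FF b0 u = (b0 * b, qcls NN (lin_ext (Lg lm b0) f))"
      by (simp add: uf qmap_lin_ext_N[OF L_N free_on_fin[OF f]])
    then show "beta_i C lm rm i a (lac FF b0 u) = lac FF b0 (beta_i C lm rm i a u)"
      using bf[OF fl] bf[OF f] sv_L[OF f, of b0] emb_lac[OF c[OF U[OF f, of b]], of b0] L(4)[OF U[OF f, of b], of b0]
      by (simp add: uf)
    have "rac FF u b0 = (b * b0, qcls NN (lin_ext (Rg rm b0) f))"
      by (simp add: uf qmap_lin_ext_N[OF R_N free_on_fin[OF f]])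
    then show "beta_i C lm rm i a (rac FF u b0) = rac FF (beta_i C lm rm i a u) b0"
      using bf[OF fr] bf[OF f] sv_R[OF f, of b0] emb_rac[OF c[OF U[OF f, of b]], of b0] L(5)[OF U[OF f, of b], of b0]
      by (simp add: uf)
  qed
qed

lemma main: "is_alg_hom MM FF (beta_i C lm rm i)"
  unfolding is_alg_hom_def
proof (intro conjI ballI allI)
  fix a assume "a \<in> Lop MM"
  then show "beta_i C lm rm i a \<in> Lop FF" by (rule beta_Lop)
next
  fix a a' v assume a: "a \<in> Lop MM" and a': "a' \<in> Lop MM" and v: "v \<in> car FF"
  obtain U where U: "U \<in> car MM" and bU: "\<forall>a''\<in>Lop MM. beta_i C lm rm i a'' v = emb (a'' U)"
    using beta_on[OF a v] by blast
  have c: "snd (a U) \<in> C i" "snd (a' U) \<in> C i" using LopD(1)[OF a U] LopD(1)[OF a' U] by (simp_all add: car_MM')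
  have "beta_i C lm rm i a (beta_i C lm rm i a' v) = beta_i C lm rm i a (fst (a' U), qcls NN (delta ([i], [snd (a' U)])))"
    using bU a' by (simp add: emb_def)
  also have "\<dots> = emb (a (fst (a' U), snd (a' U)))"
    using beta_formula[OF a delta_free_on[OF GG_single[OF c(2)]]] by (simp add: s\<phi>_def)
  also have "\<dots> = beta_i C lm rm i (a \<circ> a') v" using bU Lop_comp[OF a a'] by simp
  finally show "beta_i C lm rm i (a \<circ> a') v = beta_i C lm rm i a (beta_i C lm rm i a' v)" by simp
  show "beta_i C lm rm i (\<lambda>u. add MM (a u) (a' u)) v = add FF (beta_i C lm rm i a v) (beta_i C lm rm i a' v)"
    using bU Lop_add[OF a a'] a a' emb_add[OF c] by simp
next
  fix z a v assume a: "a \<in> Lop MM" and v: "v \<in> car FF"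
  obtain U where U: "U \<in> car MM" and bU: "\<forall>a''\<in>Lop MM. beta_i C lm rm i a'' v = emb (a'' U)"
    using beta_on[OF a v] by blast
  have c: "snd (a U) \<in> C i" using LopD(1)[OF a U] by (simp_all add: car_MM')
  show "beta_i C lm rm i (\<lambda>u. scl MM z (a u)) v = scl FF z (beta_i C lm rm i a v)"
    using bU Lop_scl[OF a] a emb_scl[OF c] by simp
qed

end

theorem corollary2p3:
  fixes C :: "'i \<Rightarrow> 'x::cvec set"
    and lm :: "'i \<Rightarrow> 'b::calg1 \<Rightarrow> 'x \<Rightarrow> 'x"
    and rm :: "'i \<Rightarrow> 'x \<Rightarrow> 'b \<Rightarrow> 'x"
    and i :: 'i
  assumes "\<forall>j. bimod (C j) (lm j) (rm j)"
  shows "is_alg_hom (Xmod C lm rm i) (FP C lm rm) (beta_i C lm rm i)"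
proof -
  interpret fpctx C lm rm i by (rule fpctx.intro) (rule assms)
  show ?thesis by (rule main)
qed



end
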